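(* Fix $h\in\mathbb{N}$, $\alpha\in(0,1)$ and $a\in(0,1/2)$, and let $\varepsilon=n^{-a}$. Let $S$ be any Steiner triple system of order $n$, and order its hyperedges uniformly at random to obtain an ordered Steiner triple system $\mathbf{S}\in\mathcal{O}$. Then \[ \Pr\left(\mathbf{S}_{\alpha N}\notin\mathcal{O}^{\varepsilon,h}_{\alpha N}\right)=\exp\left(-\Omega\left(n^{1-2a}\right)\right). \]
   Context: Throughout, $n\equiv1$ or $3\pmod 6$, $N=\binom n2/3$, quantities like $\alpha N$ are treated as integers, and asymptotics are as $n\to\infty$. A partial system is a 3-uniform hypergraph on $[n]$ in which every pair lies in at most one hyperedge; $\mathcal{O}$ is the set of ordered Steiner triple systems and $\mathcal{O}_m$ the set of ordered partial systems with $m$ hyperedges; $S_i$ denotes the first $i$ hyperedges of an ordered system $S$. $G(S)$ is the graph on $[n]$ of pairs not covered by any hyperedge of $S$. For a graph $G$ with $n$ vertices and $m$ edges, $d(G)=m/\binom n2$; $G$ is $(\varepsilon,h)$-quasirandom if every set $A$ of at most $h$ vertices satisfies $\left|\bigcap_{w\in A}N_G(w)\right|=(1\pm\varepsilon)d(G)^{|A|}n$. $\mathcal{O}^{\varepsilon,h}_m$ is the set of $S\in\mathcal{O}_m$ such that $G(S_i)$ is $(\varepsilon,h)$-quasirandom for all $i\le m$. *)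

theory Defs
  imports "HOL-Probability.Probability"
begin

text \<open>Vertex set [n] is rendered as {..<n}. Hyperedges are 3-element sets of vertices.\<close>

definition partial_system :: "nat \<Rightarrow> nat set set \<Rightarrow> bool" where
  "partial_system n H \<longleftrightarrow>
     (\<forall>e\<in>H. e \<subseteq> {..<n} \<and> card e = 3) \<and>
     (\<forall>u<n. \<forall>v<n. u \<noteq> v \<longrightarrow> card {e\<in>H. {u, v} \<subseteq> e} \<le> 1)"

definition steiner_triple_system :: "nat \<Rightarrow> nat set set \<Rightarrow> bool" where
  "steiner_triple_system n S \<longleftrightarrow>
     (\<forall>e\<in>S. e \<subseteq> {..<n} \<and> card e = 3) \<and>
     (\<forall>u<n. \<forall>v<n. u \<noteq> v \<longrightarrow> (\<exists>!e. e \<in> S \<and> {u, v} \<subseteq> e))"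

definition orderings :: "nat set set \<Rightarrow> nat set list set" where
  "orderings S = {xs. distinct xs \<and> set xs = S}"

definition leave_adj :: "nat \<Rightarrow> nat set list \<Rightarrow> nat \<Rightarrow> nat \<Rightarrow> bool" where
  "leave_adj n xs u v \<longleftrightarrow> u < n \<and> v < n \<and> u \<noteq> v \<and> \<not> (\<exists>e\<in>set xs. {u, v} \<subseteq> e)"

definition leave_edges :: "nat \<Rightarrow> nat set list \<Rightarrow> nat set set" where
  "leave_edges n xs = {{u, v} | u v. leave_adj n xs u v}"

definition leave_density :: "nat \<Rightarrow> nat set list \<Rightarrow> real" where
  "leave_density n xs = real (card (leave_edges n xs)) / real (n choose 2)"

definition common_nbhd :: "nat \<Rightarrow> nat set list \<Rightarrow> nat set \<Rightarrow> nat set" where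
  "common_nbhd n xs A = {v. v < n \<and> (\<forall>w\<in>A. leave_adj n xs w v)}"

definition quasirandom :: "real \<Rightarrow> nat \<Rightarrow> nat \<Rightarrow> nat set list \<Rightarrow> bool" where
  "quasirandom eps h n xs \<longleftrightarrow>
     (\<forall>A. A \<subseteq> {..<n} \<and> card A \<le> h \<longrightarrow>
        (1 - eps) * leave_density n xs ^ card A * real n \<le> real (card (common_nbhd n xs A)) \<and>
        real (card (common_nbhd n xs A)) \<le> (1 + eps) * leave_density n xs ^ card A * real n)"

definition in_O_qr :: "real \<Rightarrow> nat \<Rightarrow> nat \<Rightarrow> nat \<Rightarrow> nat set list \<Rightarrow> bool" where
  "in_O_qr eps h n m xs \<longleftrightarrow>
     distinct xs \<and> length xs = m \<and> partial_system n (set xs) \<and>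
     (\<forall>i\<le>m. quasirandom eps h n (take i xs))"

definition alphaN :: "real \<Rightarrow> nat \<Rightarrow> nat" where
  "alphaN \<alpha> n = nat \<lfloor>\<alpha> * (real (n choose 2) / 3)\<rfloor>"

end

theory Submission
  imports Defs "HOL-Combinatorics.Multiset_Permutations" "HOL-Real_Asymp.Real_Asymp"
begin

definition sub :: "'a set \<Rightarrow> nat \<Rightarrow> 'a set set" where
  "sub G i = {T. T \<subseteq> G \<and> card T = i}"

definition avg :: "'a set \<Rightarrow> nat \<Rightarrow> ('a set \<Rightarrow> real) \<Rightarrow> real" where
  "avg G i F = (\<Sum>T\<in>sub G i. F T) / real (card (sub G i))"

definition Yv :: "'a set \<Rightarrow> 'a set \<Rightarrow> real" where
  "Yv B T = (if B \<inter> T = {} then 1 else 0)"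

lemma finite_sub[simp]: "finite G \<Longrightarrow> finite (sub G i)"
  unfolding sub_def by (rule finite_subset[of _ "Pow G"]) auto

lemma card_sub: "finite G \<Longrightarrow> card (sub G i) = card G choose i"
  unfolding sub_def using n_subsets by blast

lemma sub_fin: "finite G \<Longrightarrow> T \<in> sub G i \<Longrightarrow> finite T \<and> T \<subseteq> G \<and> card T = i"
  unfolding sub_def using finite_subset by auto

lemma sum_sub_mono:
  fixes F :: "'a set \<Rightarrow> real"
  assumes fin: "finite H" and j: "j < card H" and mono: "\<And>T T'. T \<subseteq> T' \<Longrightarrow> F T \<le> F T'"
  shows "real (card H - j) * (\<Sum>T\<in>sub H j. F T) \<le> real (Suc j) * (\<Sum>T\<in>sub H (Suc j). F T)"
proof -
  have "real (card H - j) * (\<Sum>T\<in>sub H j. F T) = (\<Sum>T\<in>sub H j. \<Sum>y\<in>H-T. F T)"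
    by (simp add: sum_distrib_left) (intro sum.cong refl,
        metis card_Diff_subset fin sub_fin mult.commute of_nat_diff)
  also have "\<dots> \<le> (\<Sum>T\<in>sub H j. \<Sum>y\<in>H-T. F (insert y T))"
    by (intro sum_mono mono) auto
  also have "\<dots> = (\<Sum>p\<in>Sigma (sub H j) (\<lambda>T. H-T). F (insert (snd p) (fst p)))"
    by (subst sum.Sigma) (auto simp: fin split_beta)
  also have "\<dots> = (\<Sum>p\<in>Sigma (sub H (Suc j)) (\<lambda>T. T). F (fst p))"
  proof (rule sum.reindex_bij_witness[where i="\<lambda>p. (fst p - {snd p}, snd p)"
        and j="\<lambda>p. (insert (snd p) (fst p), snd p)"], goal_cases)
    case (1 a)
    then obtain T y where "a = (T, y)" "y \<notin> T" by (cases a) auto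
    then show ?case by simp
  next
    case (2 a)
    then obtain T y where a: "a = (T, y)" "T \<in> sub H j" "y \<in> H" "y \<notin> T" by (cases a) auto
    have "finite T" using a(2) sub_fin[OF fin] by blast
    then show ?case using a unfolding sub_def by simp
  next
    case (3 b)
    then obtain T y where "b = (T, y)" "y \<in> T" by (cases b) auto
    then show ?case by (simp add: insert_absorb)
  next
    case (4 b)
    then obtain T y where a: "b = (T, y)" "T \<in> sub H (Suc j)" "y \<in> T" by (cases b) auto
    have "finite T" "T \<subseteq> H" "card T = Suc j" using a(2) sub_fin[OF fin] by blast+
    then show ?case using a unfolding sub_def by auto
  next
    case (5 a) then show ?case by (simp add: split_beta)
  qed
  also have "\<dots> = (\<Sum>T\<in>sub H (Suc j). \<Sum>y\<in>T. F T)"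
    by (subst sum.Sigma) (auto simp: fin split_beta dest: sub_fin[OF fin])
  also have "\<dots> = real (Suc j) * (\<Sum>T\<in>sub H (Suc j). F T)"
    by (simp add: sum_distrib_left) (intro sum.cong refl, simp add: sub_def)
  finally show ?thesis .
qed

lemma avg_sub_mono:
  fixes F :: "'a set \<Rightarrow> real"
  assumes fin: "finite H" and j: "j < card H" and mono: "\<And>T T'. T \<subseteq> T' \<Longrightarrow> F T \<le> F T'"
  shows "avg H j F \<le> avg H (Suc j) F"
proof -
  let ?M = "card H"
  have c1: "real (?M choose j) * real (?M - j) = real (?M choose Suc j) * real (Suc j)"
  proof -
    obtain m where m: "?M = Suc m" using j by (cases ?M) auto
    have "(?M - j) * (?M choose j) = ?M * ((?M - 1) choose j)" by (rule binomial_absorb_comp)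
    also have "\<dots> = (?M choose Suc j) * Suc j" using Suc_times_binomial_eq[of m j] m by simp
    finally show ?thesis by (metis mult.commute of_nat_mult)
  qed
  have pos1: "real (?M choose j) > 0" using j by simp
  have pos2: "real (?M choose Suc j) > 0" using j by simp
  have pos3: "real (?M - j) > 0" using j by simp
  have "avg H j F = (real (?M - j) * (\<Sum>T\<in>sub H j. F T)) / (real (?M choose j) * real (?M - j))"
    using pos3 by (simp add: avg_def card_sub fin)
  also have "\<dots> \<le> (real (Suc j) * (\<Sum>T\<in>sub H (Suc j). F T)) / (real (?M choose Suc j) * real (Suc j))"
    unfolding c1 using sum_sub_mono[OF fin j mono] pos2 by (intro divide_right_mono) auto
  also have "\<dots> = avg H (Suc j) F"
    by (simp add: avg_def card_sub fin)
  finally show ?thesis .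
qed

lemma sub_zero: "finite G \<Longrightarrow> sub G 0 = {{}}"
  unfolding sub_def by (auto dest: finite_subset)

lemma sub_Suc_split:
  assumes "finite G" "x \<in> G"
  shows "sub G (Suc j) = sub (G - {x}) (Suc j) \<union> insert x ` sub (G - {x}) j"
    "sub (G - {x}) (Suc j) \<inter> insert x ` sub (G - {x}) j = {}"
proof -
  show "sub G (Suc j) = sub (G - {x}) (Suc j) \<union> insert x ` sub (G - {x}) j"
  proof (rule set_eqI, rule iffI)
    fix T assume T: "T \<in> sub G (Suc j)"
    have fT: "finite T" using T assms(1) sub_fin by blast
    show "T \<in> sub (G - {x}) (Suc j) \<union> insert x ` sub (G - {x}) j"
    proof (cases "x \<in> T")
      case True
      then have "T = insert x (T - {x})" by auto
      moreover have "T - {x} \<in> sub (G - {x}) j" using T True fT by (auto simp: sub_def)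
      ultimately show ?thesis by blast
    next
      case False then show ?thesis using T by (auto simp: sub_def)
    qed
  next
    fix T assume "T \<in> sub (G - {x}) (Suc j) \<union> insert x ` sub (G - {x}) j"
    then show "T \<in> sub G (Suc j)"
    proof
      assume "T \<in> sub (G - {x}) (Suc j)" then show ?thesis by (auto simp: sub_def)
    next
      assume "T \<in> insert x ` sub (G - {x}) j"
      then obtain U where U: "T = insert x U" "U \<in> sub (G - {x}) j" by blast
      have "finite U" using U(2) assms(1) sub_fin[of "G - {x}"] by blast
      then show ?thesis using U assms by (auto simp: sub_def card_insert_if)
    qed
  qed
  show "sub (G - {x}) (Suc j) \<inter> insert x ` sub (G - {x}) j = {}"
    by (auto simp: sub_def)
qed

lemma avg_remove:
  fixes F :: "'a set \<Rightarrow> real"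
  assumes fin: "finite G" and x: "x \<in> G" and i: "i < card G"
    and mono: "\<And>T T'. T \<subseteq> T' \<Longrightarrow> F T \<le> F T'"
    and indep: "\<And>T. F (insert x T) = F T"
  shows "avg G i F \<le> avg (G - {x}) i F"
proof (cases i)
  case 0
  then show ?thesis using fin by (simp add: avg_def sub_zero)
next
  case (Suc j)
  let ?G' = "G - {x}"
  have finG': "finite ?G'" using fin by simp
  have cG': "card ?G' = card G - 1" using x fin by simp
  have j: "j < card ?G'" using i Suc cG' by simp
  define S1 where "S1 = (\<Sum>T\<in>sub ?G' (Suc j). F T)"
  define S0 where "S0 = (\<Sum>T\<in>sub ?G' j. F T)"
  define c1 where "c1 = real (card (sub ?G' (Suc j)))"
  define c0 where "c0 = real (card (sub ?G' j))"
  have c1pos: "c1 > 0" unfolding c1_def card_sub[OF finG'] using i Suc cG' by simp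
  have c0pos: "c0 > 0" unfolding c0_def card_sub[OF finG'] using j by simp
  have sumG: "(\<Sum>T\<in>sub G (Suc j). F T) = S1 + S0"
  proof -
    have "(\<Sum>T\<in>sub G (Suc j). F T) = S1 + (\<Sum>T\<in>insert x ` sub ?G' j. F T)"
      unfolding S1_def sub_Suc_split(1)[OF fin x]
      by (rule sum.union_disjoint) (use fin sub_Suc_split(2)[OF fin x] in auto)
    also have "(\<Sum>T\<in>insert x ` sub ?G' j. F T) = S0"
      unfolding S0_def
      by (subst sum.reindex) (auto simp: inj_on_def indep sub_def)
    finally show ?thesis .
  qed
  have cardG: "real (card (sub G (Suc j))) = c1 + c0"
  proof -
    obtain m where m: "card G = Suc m" using i by (cases "card G") auto
    show ?thesis unfolding c1_def c0_def card_sub[OF fin] card_sub[OF finG'] cG' m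
      by simp
  qed
  have "S0 / c0 \<le> S1 / c1"
    using avg_sub_mono[OF finG' j mono] unfolding avg_def S0_def S1_def c0_def c1_def .
  then have "S0 * c1 \<le> S1 * c0" using c0pos c1pos by (simp add: field_simps)
  then have "(S1 + S0) / (c1 + c0) \<le> S1 / c1" using c0pos c1pos by (simp add: field_simps)
  then show ?thesis unfolding avg_def Suc sumG cardG S1_def c1_def .
qed

lemma avg_shrink:
  fixes F :: "'a set \<Rightarrow> real"
  assumes finD: "finite D" and fin: "finite G'" and disj: "G' \<inter> D = {}" and i: "i \<le> card G'"
    and mono: "\<And>T T'. T \<subseteq> T' \<Longrightarrow> F T \<le> F T'"
    and indep: "\<And>x T. x \<in> D \<Longrightarrow> F (insert x T) = F T"
  shows "avg (G' \<union> D) i F \<le> avg G' i F"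
  using finD disj indep
proof (induction D rule: finite_induct)
  case empty then show ?case by simp
next
  case (insert x D)
  have "avg (G' \<union> insert x D) i F \<le> avg ((G' \<union> insert x D) - {x}) i F"
  proof (rule avg_remove)
    show "finite (G' \<union> insert x D)" using fin insert by simp
    show "i < card (G' \<union> insert x D)"
    proof -
      have "card G' < card (G' \<union> insert x D)"
        using insert fin by (intro psubset_card_mono) auto
      then show ?thesis using i by simp
    qed
  qed (use mono insert in auto)
  also have "(G' \<union> insert x D) - {x} = G' \<union> D" using insert by auto
  also have "avg (G' \<union> D) i F \<le> avg G' i F" using insert by auto
  finally show ?case .
qed

lemma avg_shrink':
  fixes F :: "'a set \<Rightarrow> real"
  assumes fin: "finite G" and sub: "G' \<subseteq> G" and i: "i \<le> card G'"
    and mono: "\<And>T T'. T \<subseteq> T' \<Longrightarrow> F T \<le> F T'"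
    and indep: "\<And>x T. x \<in> G - G' \<Longrightarrow> F (insert x T) = F T"
  shows "avg G i F \<le> avg G' i F"
proof -
  have "G = G' \<union> (G - G')" using sub by auto
  then show ?thesis
    using avg_shrink[of "G - G'" G' i F] fin sub i mono indep
    by (metis Diff_disjoint finite_Diff finite_subset)
qed

lemma avg_add: "avg G i (\<lambda>T. F T + H T) = avg G i F + avg G i H"
  unfolding avg_def by (simp add: sum.distrib add_divide_distrib)

lemma avg_cmult: "avg G i (\<lambda>T. c * F T) = c * avg G i F"
  unfolding avg_def by (simp add: sum_distrib_left[symmetric])

lemma avg_neg: "avg G i (\<lambda>T. - F T) = - avg G i F"
  unfolding avg_def by (simp add: sum_negf)

lemma avg_mono: "(\<And>T. T \<in> sub G i \<Longrightarrow> F T \<le> H T) \<Longrightarrow> avg G i F \<le> avg G i H"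
  unfolding avg_def by (intro divide_right_mono sum_mono) auto

lemma avg_nonneg: "(\<And>T. T \<in> sub G i \<Longrightarrow> 0 \<le> F T) \<Longrightarrow> 0 \<le> avg G i F"
  unfolding avg_def by (intro divide_nonneg_nonneg sum_nonneg) auto

lemma sum_sub_eq_avg: "finite G \<Longrightarrow> (\<Sum>T\<in>sub G i. F T) = real (card (sub G i)) * avg G i F"
  unfolding avg_def by (cases "card (sub G i) = 0") auto

lemma sub_diff: "sub (G - B) i = {T \<in> sub G i. B \<inter> T = {}}"
  unfolding sub_def by auto

lemma sum_Yv: "finite G \<Longrightarrow> (\<Sum>T\<in>sub G i. Yv B T * F T) = (\<Sum>T\<in>sub (G - B) i. F T)"
proof -
  assume fin: "finite G"
  have "(\<Sum>T\<in>sub G i. Yv B T * F T) = (\<Sum>T\<in>sub G i. if B \<inter> T = {} then F T else 0)"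
    unfolding Yv_def by (intro sum.cong) auto
  also have "\<dots> = (\<Sum>T\<in>{T \<in> sub G i. B \<inter> T = {}}. F T)"
    using fin by (simp add: sum.inter_filter)
  finally show ?thesis unfolding sub_diff .
qed

lemma avg_Yv: "finite G \<Longrightarrow> avg G i (Yv B) = real (card (sub (G - B) i)) / real (card (sub G i))"
  using sum_Yv[where F="\<lambda>_. 1" and G=G and B=B and i=i] unfolding avg_def by simp

lemma card_sub_diff_le: "finite G \<Longrightarrow> card (sub (G - B) i) \<le> card (sub G i)"
  unfolding sub_diff by (intro card_mono) auto

lemma avg_Yv_bounds: "finite G \<Longrightarrow> 0 \<le> avg G i (Yv B) \<and> avg G i (Yv B) \<le> 1"
  using card_sub_diff_le[of G B i] by (auto simp: avg_Yv divide_le_eq_1)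

lemma Yv_01: "Yv B T = 0 \<or> Yv B T = 1"
  unfolding Yv_def by auto

lemma Yv_anti: "T \<subseteq> T' \<Longrightarrow> Yv B T' \<le> Yv B T"
  unfolding Yv_def by auto

lemma avg_prod_bound:
  fixes c :: real
  assumes fin: "finite G" and finJ: "finite J" and c: "c \<ge> -1"
    and disj: "\<forall>u\<in>J. \<forall>v\<in>J. u \<noteq> v \<longrightarrow> B u \<inter> B v = {}"
  shows "avg G i (\<lambda>T. \<Prod>v\<in>J. 1 + c * Yv (B v) T) \<le> (\<Prod>v\<in>J. 1 + c * avg G i (Yv (B v)))"
  using finJ disj
proof (induction J rule: finite_induct)
  case empty
  show ?case unfolding avg_def by (auto simp: divide_le_eq_1)
next
  case (insert m J)
  define P where "P = (\<lambda>T. \<Prod>v\<in>J. 1 + c * Yv (B v) T)"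
  define G' where "G' = G - B m"
  define am where "am = avg G i (Yv (B m))"
  have finG': "finite G'" using fin by (simp add: G'_def)
  have fac_nn: "0 \<le> 1 + c * Yv B' T" for B' T using c Yv_01[of B' T] by auto
  have P_nn: "0 \<le> P T" for T unfolding P_def by (intro prod_nonneg) (use fac_nn in auto)
  have am01: "0 \<le> am" "am \<le> 1" using avg_Yv_bounds[OF fin] by (auto simp: am_def)
  have amc: "0 \<le> 1 + c * am"
  proof (cases "c \<ge> 0")
    case True then show ?thesis using am01 by simp
  next
    case False
    then have "c * am \<ge> c * 1" using am01 by (intro mult_left_mono_neg) auto
    then show ?thesis using c by simp
  qed
  have dJ: "\<forall>u\<in>J. \<forall>v\<in>J. u \<noteq> v \<longrightarrow> B u \<inter> B v = {}" using insert.prems by blast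
  have IH: "avg G i P \<le> (\<Prod>v\<in>J. 1 + c * avg G i (Yv (B v)))"
    unfolding P_def by (rule insert.IH[OF dJ])
  have indepP: "P (insert x T) = P T" if "x \<in> G - G'" for x T
  proof -
    have "x \<in> B m" using that by (simp add: G'_def)
    have "x \<notin> B v" if "v \<in> J" for v
    proof -
      have "m \<noteq> v" using insert.hyps(2) that by auto
      then have "B m \<inter> B v = {}" using insert.prems that by simp
      then show ?thesis using \<open>x \<in> B m\<close> by blast
    qed
    then have "Yv (B v) (insert x T) = Yv (B v) T" if "v \<in> J" for v
      using that unfolding Yv_def by auto
    then show ?thesis unfolding P_def by (intro prod.cong) auto
  qed
  have key: "c * (am * avg G' i P) \<le> c * (am * avg G i P)"
  proof (cases "card (sub G' i) = 0")
    case True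
    then have "am = 0" by (simp add: am_def avg_Yv[OF fin] G'_def)
    then show ?thesis by simp
  next
    case False
    then have i: "i \<le> card G'" using finG' by (simp add: card_sub)
    show ?thesis
    proof (cases "c \<ge> 0")
      case True
      have monoF: "(- P) T \<le> (- P) T'" if "T \<subseteq> T'" for T T'
      proof -
        have "P T' \<le> P T" unfolding P_def
          by (intro prod_mono conjI fac_nn) (use True Yv_anti[OF that] in \<open>auto intro: mult_left_mono\<close>)
        then show ?thesis by simp
      qed
      have "avg G i (\<lambda>T. - P T) \<le> avg G' i (\<lambda>T. - P T)"
        by (rule avg_shrink'[OF fin _ i]) (use monoF indepP in \<open>auto simp: G'_def\<close>)
      then have "avg G' i P \<le> avg G i P" by (simp add: avg_neg)
      then have "am * avg G' i P \<le> am * avg G i P" using am01 by (intro mult_left_mono) auto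
      then show ?thesis using True by (rule mult_left_mono)
    next
      case False
      have monoF: "P T \<le> P T'" if "T \<subseteq> T'" for T T'
        unfolding P_def
        by (intro prod_mono conjI fac_nn) (use False Yv_anti[OF that] in \<open>auto intro: mult_left_mono_neg\<close>)
      have "avg G i P \<le> avg G' i P"
        by (rule avg_shrink'[OF fin _ i]) (use monoF indepP in \<open>auto simp: G'_def\<close>)
      then have "am * avg G i P \<le> am * avg G' i P" using am01 by (intro mult_left_mono) auto
      then show ?thesis using False mult_left_mono_neg[of "am * avg G i P" "am * avg G' i P" c] by simp
    qed
  qed
  have "avg G i (\<lambda>T. \<Prod>v\<in>insert m J. 1 + c * Yv (B v) T) = avg G i (\<lambda>T. P T + c * (Yv (B m) T * P T))"
    using insert.hyps by (simp add: P_def algebra_simps)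
  also have "\<dots> = avg G i P + c * avg G i (\<lambda>T. Yv (B m) T * P T)"
    by (simp add: avg_add avg_cmult)
  also have "avg G i (\<lambda>T. Yv (B m) T * P T) = am * avg G' i P"
  proof -
    have "avg G i (\<lambda>T. Yv (B m) T * P T) = (\<Sum>T\<in>sub G' i. P T) / real (card (sub G i))"
      unfolding avg_def G'_def sum_Yv[OF fin] ..
    also have "\<dots> = real (card (sub G' i)) * avg G' i P / real (card (sub G i))"
      using sum_sub_eq_avg[OF finG'] by simp
    also have "\<dots> = am * avg G' i P" unfolding am_def avg_Yv[OF fin] G'_def by simp
    finally show ?thesis .
  qed
  also have "avg G i P + c * (am * avg G' i P) \<le> avg G i P + c * (am * avg G i P)"
    using key by simp
  also have "\<dots> = (1 + c * am) * avg G i P" by (simp add: algebra_simps)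
  also have "\<dots> \<le> (1 + c * am) * (\<Prod>v\<in>J. 1 + c * avg G i (Yv (B v)))"
    using IH amc by (rule mult_left_mono)
  also have "\<dots> = (\<Prod>v\<in>insert m J. 1 + c * avg G i (Yv (B v)))"
    using insert.hyps by (simp add: am_def)
  finally show ?case .
qed

lemma hoeff_bern:
  fixes l p :: real
  assumes p: "0 \<le> p" "p \<le> 1"
  shows "exp (- l * p) * (1 + (exp l - 1) * p) \<le> exp (l\<^sup>2 / 8)"
proof (cases "l \<ge> 0")
  case True
  have pos: "0 < 1 + p * (exp l - 1)" using p True by (intro add_pos_nonneg) auto
  have "- l * p + ln (1 + p * (exp l - 1)) \<le> l\<^sup>2 / 8"
    using Hoeffdings_lemma_aux[OF True p(1)] by simp
  then have th: "exp (- l * p + ln (1 + p * (exp l - 1))) \<le> exp (l\<^sup>2 / 8)" by simp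
  have e: "exp (- l * p + ln (1 + p * (exp l - 1))) = exp (- l * p) * (1 + (exp l - 1) * p)"
    using pos by (simp only: exp_add exp_ln) (simp add: mult.commute)
  show ?thesis using th unfolding e .
next
  case False
  define h where "h = - l"
  define q where "q = 1 - p"
  have h: "h \<ge> 0" using False by (simp add: h_def)
  have q: "q \<ge> 0" using p by (simp add: q_def)
  have pos: "0 < 1 + q * (exp h - 1)" using q h by (intro add_pos_nonneg) auto
  have "- h * q + ln (1 + q * (exp h - 1)) \<le> h\<^sup>2 / 8"
    using Hoeffdings_lemma_aux[OF h q] by simp
  then have th: "exp (- h * q + ln (1 + q * (exp h - 1))) \<le> exp (h\<^sup>2 / 8)" by simp
  have e: "exp (- h * q + ln (1 + q * (exp h - 1))) = exp (- h * q) * (1 + q * (exp h - 1))"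
    using pos by (simp only: exp_add exp_ln)
  have hl: "h\<^sup>2 = l\<^sup>2" by (simp add: h_def)
  have *: "exp (- h * q) * (1 + q * (exp h - 1)) \<le> exp (l\<^sup>2 / 8)"
    using th unfolding e hl .
  have "exp (- l * p) * (1 + (exp l - 1) * p) = exp (- h * q) * (1 + q * (exp h - 1))"
  proof -
    have e1: "exp (- h * q) = exp (h * p) * exp (- h)" by (simp add: q_def algebra_simps flip: exp_add)
    have e2: "exp l = exp (- h)" by (simp add: h_def)
    have e3: "exp (-h) * exp h = 1" by (simp flip: exp_add)
    show ?thesis unfolding e1 e2 by (simp add: h_def q_def algebra_simps e3 flip: exp_add)
  qed
  then show ?thesis using * by simp
qed

lemma exp_Yv: "exp (l * Yv B T) = 1 + (exp l - 1) * Yv B T"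
  unfolding Yv_def by auto

lemma avg_exp_bound:
  fixes l :: real
  assumes fin: "finite G" and finJ: "finite J"
    and disj: "\<forall>u\<in>J. \<forall>v\<in>J. u \<noteq> v \<longrightarrow> B u \<inter> B v = {}"
  shows "avg G i (\<lambda>T. exp (l * (\<Sum>v\<in>J. Yv (B v) T - avg G i (Yv (B v)))))
         \<le> exp (real (card J) * l\<^sup>2 / 8)"
proof -
  define p where "p v = avg G i (Yv (B v))" for v
  have p01: "0 \<le> p v" "p v \<le> 1" for v using avg_Yv_bounds[OF fin] by (auto simp: p_def)
  have eq: "exp (l * (\<Sum>v\<in>J. Yv (B v) T - p v)) =
        (\<Prod>v\<in>J. exp (- l * p v)) * (\<Prod>v\<in>J. 1 + (exp l - 1) * Yv (B v) T)" for T
  proof -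
    have "exp (l * (\<Sum>v\<in>J. Yv (B v) T - p v)) = (\<Prod>v\<in>J. exp (l * (Yv (B v) T - p v)))"
      using finJ by (simp add: sum_distrib_left exp_sum)
    also have "\<dots> = (\<Prod>v\<in>J. exp (- l * p v) * (1 + (exp l - 1) * Yv (B v) T))"
    proof (intro prod.cong refl)
      fix v
      have "exp (l * (Yv (B v) T - p v)) = exp (- l * p v) * exp (l * Yv (B v) T)"
        by (simp add: algebra_simps flip: exp_add)
      then show "exp (l * (Yv (B v) T - p v)) = exp (- l * p v) * (1 + (exp l - 1) * Yv (B v) T)"
        by (simp add: exp_Yv)
    qed
    finally show ?thesis by (simp add: prod.distrib)
  qed
  have "avg G i (\<lambda>T. exp (l * (\<Sum>v\<in>J. Yv (B v) T - p v)))
      = (\<Prod>v\<in>J. exp (- l * p v)) * avg G i (\<lambda>T. \<Prod>v\<in>J. 1 + (exp l - 1) * Yv (B v) T)"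
    unfolding eq by (rule avg_cmult)
  also have "\<dots> \<le> (\<Prod>v\<in>J. exp (- l * p v)) * (\<Prod>v\<in>J. 1 + (exp l - 1) * p v)"
    unfolding p_def
    by (intro mult_left_mono avg_prod_bound[OF fin finJ _ disj] prod_nonneg) auto
  also have "\<dots> = (\<Prod>v\<in>J. exp (- l * p v) * (1 + (exp l - 1) * p v))"
    by (simp add: prod.distrib)
  also have "\<dots> \<le> (\<Prod>v\<in>J. exp (l\<^sup>2 / 8))"
  proof (rule prod_mono, rule conjI)
    fix v assume "v \<in> J"
    have "0 \<le> 1 + (exp l - 1) * p v"
    proof (cases "l \<ge> 0")
      case True then show ?thesis using p01[of v] by simp
    next
      case False
      then have "exp l - 1 \<ge> -1" by simp
      then have "(exp l - 1) * p v \<ge> -1 * p v"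
        using p01[of v] by (intro mult_right_mono) auto
      then show ?thesis using p01[of v] by simp
    qed
    then show "0 \<le> exp (- l * p v) * (1 + (exp l - 1) * p v)" by simp
    show "exp (- l * p v) * (1 + (exp l - 1) * p v) \<le> exp (l\<^sup>2 / 8)"
      using hoeff_bern[OF p01] .
  qed
  also have "\<dots> = exp (real (card J) * l\<^sup>2 / 8)"
    by (simp add: exp_of_nat_mult[symmetric])
  finally show ?thesis unfolding p_def .
qed

lemma markov_count:
  fixes l L :: real and E :: "'a set set"
  assumes fin: "finite G" and finJ: "finite J"
    and disj: "\<forall>u\<in>J. \<forall>v\<in>J. u \<noteq> v \<longrightarrow> B u \<inter> B v = {}"
    and E: "E \<subseteq> sub G i"
    and EL: "\<And>T. T \<in> E \<Longrightarrow> L \<le> l * (\<Sum>v\<in>J. Yv (B v) T - avg G i (Yv (B v)))"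
  shows "real (card E) \<le> real (card (sub G i)) * exp (real (card J) * l\<^sup>2 / 8 - L)"
proof -
  define \<Phi> where "\<Phi> T = l * (\<Sum>v\<in>J. Yv (B v) T - avg G i (Yv (B v)))" for T
  have finE: "finite E" using E fin finite_subset finite_sub by blast
  have "real (card E) * exp L = (\<Sum>T\<in>E. exp L)" by simp
  also have "\<dots> \<le> (\<Sum>T\<in>E. exp (\<Phi> T))"
    by (intro sum_mono) (use EL in \<open>auto simp: \<Phi>_def\<close>)
  also have "\<dots> \<le> (\<Sum>T\<in>sub G i. exp (\<Phi> T))"
    by (rule sum_mono2) (use fin E in auto)
  also have "\<dots> = real (card (sub G i)) * avg G i (\<lambda>T. exp (\<Phi> T))"
    by (rule sum_sub_eq_avg[OF fin])
  also have "\<dots> \<le> real (card (sub G i)) * exp (real (card J) * l\<^sup>2 / 8)"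
    unfolding \<Phi>_def by (intro mult_left_mono avg_exp_bound[OF fin finJ disj]) auto
  finally have "real (card E) * exp L \<le> real (card (sub G i)) * exp (real (card J) * l\<^sup>2 / 8)" .
  then have "real (card E) \<le> real (card (sub G i)) * exp (real (card J) * l\<^sup>2 / 8) / exp L"
    by (simp add: pos_le_divide_eq)
  then show ?thesis by (simp add: exp_diff)
qed

lemma tail_bound:
  fixes s :: real
  assumes fin: "finite G" and finJ: "finite J" and J: "J \<noteq> {}"
    and disj: "\<forall>u\<in>J. \<forall>v\<in>J. u \<noteq> v \<longrightarrow> B u \<inter> B v = {}"
    and s: "s > 0"
  shows "real (card {T\<in>sub G i. s \<le> \<bar>\<Sum>v\<in>J. Yv (B v) T - avg G i (Yv (B v))\<bar>})
         \<le> 2 * real (card (sub G i)) * exp (- 2 * s\<^sup>2 / real (card J))"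
proof -
  define \<Phi> where "\<Phi> T = (\<Sum>v\<in>J. Yv (B v) T - avg G i (Yv (B v)))" for T
  define m where "m = real (card J)"
  have m: "m > 0" using finJ J by (simp add: m_def card_gt_0_iff)
  define l where "l = 4 * s / m"
  have ex: "m * l\<^sup>2 / 8 - l * s = - 2 * s\<^sup>2 / m" using m by (simp add: l_def power2_eq_square field_simps)
  have ex2: "m * (- l)\<^sup>2 / 8 - l * s = - 2 * s\<^sup>2 / m" using ex by simp
  have lpos: "l > 0" using s m by (simp add: l_def)
  define E1 where "E1 = {T\<in>sub G i. s \<le> \<Phi> T}"
  define E2 where "E2 = {T\<in>sub G i. \<Phi> T \<le> - s}"
  have c1: "real (card E1) \<le> real (card (sub G i)) * exp (- 2 * s\<^sup>2 / m)"
  proof -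
    have "real (card E1) \<le> real (card (sub G i)) * exp (m * l\<^sup>2 / 8 - l * s)"
    proof (rule markov_count[OF fin finJ disj, of E1 i "l * s" l, unfolded m_def[symmetric]])
      show "E1 \<subseteq> sub G i" by (auto simp: E1_def)
      fix T assume "T \<in> E1"
      then have "s \<le> \<Phi> T" by (simp add: E1_def)
      then have "l * s \<le> l * \<Phi> T" using lpos by simp
      then show "l * s \<le> l * (\<Sum>v\<in>J. Yv (B v) T - avg G i (Yv (B v)))" by (simp add: \<Phi>_def)
    qed
    then show ?thesis unfolding ex .
  qed
  have c2: "real (card E2) \<le> real (card (sub G i)) * exp (- 2 * s\<^sup>2 / m)"
  proof -
    have "real (card E2) \<le> real (card (sub G i)) * exp (m * (- l)\<^sup>2 / 8 - l * s)"
    proof (rule markov_count[OF fin finJ disj, of E2 i "l * s" "- l", unfolded m_def[symmetric]])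
      show "E2 \<subseteq> sub G i" by (auto simp: E2_def)
      fix T assume "T \<in> E2"
      then have "\<Phi> T \<le> - s" by (simp add: E2_def)
      then have "l * \<Phi> T \<le> l * (- s)" using lpos by (intro mult_left_mono) auto
      then have "l * s \<le> - l * \<Phi> T" by simp
      then show "l * s \<le> - l * (\<Sum>v\<in>J. Yv (B v) T - avg G i (Yv (B v)))" by (simp add: \<Phi>_def)
    qed
    then show ?thesis unfolding ex2 .
  qed
  have "{T\<in>sub G i. s \<le> \<bar>\<Phi> T\<bar>} \<subseteq> E1 \<union> E2" by (auto simp: E1_def E2_def abs_if)
  then have "card {T\<in>sub G i. s \<le> \<bar>\<Phi> T\<bar>} \<le> card (E1 \<union> E2)"
    by (intro card_mono) (auto simp: E1_def E2_def fin)
  also have "\<dots> \<le> card E1 + card E2" by (rule card_Un_le)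
  finally have "real (card {T\<in>sub G i. s \<le> \<bar>\<Phi> T\<bar>}) \<le> real (card E1) + real (card E2)"
    by linarith
  then show ?thesis using c1 c2 unfolding \<Phi>_def m_def by simp
qed

lemma greedy_color:
  assumes finV: "finite V" and sym: "\<And>u v. R u v \<longleftrightarrow> R v u"
    and deg: "\<forall>v\<in>V. card {u\<in>V. u \<noteq> v \<and> R u v} \<le> D"
  shows "\<exists>col. (\<forall>v\<in>V. col v \<le> (D::nat)) \<and> (\<forall>u\<in>V. \<forall>v\<in>V. u \<noteq> v \<and> R u v \<longrightarrow> col u \<noteq> col v)"
  using finV deg
proof (induction V rule: finite_induct)
  case empty then show ?case by auto
next
  case (insert x F)
  have degF: "\<forall>v\<in>F. card {u\<in>F. u \<noteq> v \<and> R u v} \<le> D"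
  proof
    fix v assume v: "v \<in> F"
    have "card {u\<in>F. u \<noteq> v \<and> R u v} \<le> card {u\<in>insert x F. u \<noteq> v \<and> R u v}"
      by (intro card_mono) (use insert.hyps in auto)
    also have "\<dots> \<le> D" using insert.prems v by auto
    finally show "card {u\<in>F. u \<noteq> v \<and> R u v} \<le> D" .
  qed
  obtain col where col0: "(\<forall>v\<in>F. col v \<le> D) \<and> (\<forall>u\<in>F. \<forall>v\<in>F. u \<noteq> v \<and> R u v \<longrightarrow> col u \<noteq> col v)"
    using insert.IH[OF degF] ..
  note col = conjunct1[OF col0] conjunct2[OF col0]
  define N where "N = {u\<in>F. u \<noteq> x \<and> R u x}"
  have "card N \<le> card {u\<in>insert x F. u \<noteq> x \<and> R u x}"
    unfolding N_def by (intro card_mono) (use insert.hyps in auto)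
  also have "\<dots> \<le> D" using insert.prems by auto
  finally have cN: "card N \<le> D" .
  have "card (col ` N) \<le> card N" by (rule card_image_le) (use insert.hyps in \<open>auto simp: N_def\<close>)
  then have "card (col ` N) < card {0..D}" using cN by simp
  then have lt: "card (col ` N) < card {0..D}" .
  have finN: "finite N" using insert.hyps(1) by (simp add: N_def)
  have "\<not> {0..D} \<subseteq> col ` N"
  proof
    assume "{0..D} \<subseteq> col ` N"
    then have "card {0..D} \<le> card (col ` N)" using finN by (intro card_mono) auto
    then show False using lt by simp
  qed
  then obtain c where c0: "c \<in> {0..D}" "c \<notin> col ` N" by blast
  then have c: "c \<le> D" "c \<notin> col ` N" by auto
  define col' where "col' = col(x := c)"
  have "\<forall>v\<in>insert x F. col' v \<le> D" using col c by (auto simp: col'_def)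
  moreover have "\<forall>u\<in>insert x F. \<forall>v\<in>insert x F. u \<noteq> v \<and> R u v \<longrightarrow> col' u \<noteq> col' v"
  proof (intro ballI impI)
    fix u v assume uv: "u \<in> insert x F" "v \<in> insert x F" "u \<noteq> v \<and> R u v"
    show "col' u \<noteq> col' v"
    proof (cases "u = x")
      case True
      then have "v \<in> N" using uv sym by (auto simp: N_def)
      then show ?thesis using True uv c by (auto simp: col'_def)
    next
      case False
      show ?thesis
      proof (cases "v = x")
        case True
        then have "u \<in> N" using uv False by (auto simp: N_def)
        then show ?thesis using True uv c by (auto simp: col'_def)
      next
        case False2: False
        then show ?thesis using False uv col by (auto simp: col'_def)
      qed
    qed
  qed
  ultimately show ?case by blast
qed

definition Phi :: "'a set \<Rightarrow> nat \<Rightarrow> 'b set \<Rightarrow> ('b \<Rightarrow> 'a set) \<Rightarrow> 'a set \<Rightarrow> real" where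
  "Phi G i J B T = (\<Sum>v\<in>J. Yv (B v) T - avg G i (Yv (B v)))"

lemma class_bound:
  fixes s :: real
  assumes fin: "finite G" and finV: "finite V" and JV: "J \<subseteq> V"
    and disj: "\<forall>u\<in>J. \<forall>v\<in>J. u \<noteq> v \<longrightarrow> B u \<inter> B v = {}"
    and s: "s > 0"
  shows "real (card {T\<in>sub G i. s \<le> \<bar>Phi G i J B T\<bar>})
         \<le> 2 * real (card (sub G i)) * exp (- 2 * s\<^sup>2 / real (card V))"
proof (cases "J = {}")
  case True
  then show ?thesis using s by (simp add: Phi_def)
next
  case False
  have finJ: "finite J" using finV JV finite_subset by blast
  have cJ: "0 < card J" using finJ False by (simp add: card_gt_0_iff)
  have cJV: "card J \<le> card V" using finV JV by (rule card_mono)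
  have "real (card {T\<in>sub G i. s \<le> \<bar>Phi G i J B T\<bar>})
         \<le> 2 * real (card (sub G i)) * exp (- 2 * s\<^sup>2 / real (card J))"
    unfolding Phi_def by (rule tail_bound[OF fin finJ False disj s])
  also have "\<dots> \<le> 2 * real (card (sub G i)) * exp (- 2 * s\<^sup>2 / real (card V))"
  proof -
    have "2 * s\<^sup>2 / real (card V) \<le> 2 * s\<^sup>2 / real (card J)"
      using cJ cJV by (intro divide_left_mono) auto
    then show ?thesis by (intro mult_left_mono) auto
  qed
  finally show ?thesis .
qed

lemma conc_total:
  fixes t :: real
  assumes fin: "finite G" and finV: "finite V"
    and deg: "\<forall>v\<in>V. card {u\<in>V. u \<noteq> v \<and> B u \<inter> B v \<noteq> {}} \<le> D"
    and t: "t > 0"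
  shows "real (card {T\<in>sub G i. t \<le> \<bar>Phi G i V B T\<bar>})
         \<le> 2 * real (Suc D) * real (card (sub G i)) * exp (- 2 * (t / real (Suc D))\<^sup>2 / real (card V))"
proof -
  have "\<exists>col. (\<forall>v\<in>V. col v \<le> D) \<and>
      (\<forall>u\<in>V. \<forall>v\<in>V. u \<noteq> v \<and> B u \<inter> B v \<noteq> {} \<longrightarrow> col u \<noteq> col v)"
    by (rule greedy_color[OF finV, of "\<lambda>u v. B u \<inter> B v \<noteq> {}" D]) (use deg in auto)
  then obtain col where col0: "(\<forall>v\<in>V. col v \<le> D) \<and>
      (\<forall>u\<in>V. \<forall>v\<in>V. u \<noteq> v \<and> B u \<inter> B v \<noteq> {} \<longrightarrow> col u \<noteq> col v)" ..
  note col = conjunct1[OF col0] conjunct2[OF col0]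
  define Cl where "Cl j = {v\<in>V. col v = j}" for j
  define s where "s = t / real (Suc D)"
  have s: "s > 0" using t by (simp add: s_def)
  have split: "Phi G i V B T = (\<Sum>j\<in>{..D}. Phi G i (Cl j) B T)" for T
    unfolding Phi_def Cl_def
    by (rule sum.group[symmetric]) (use finV col in auto)
  have sub: "{T\<in>sub G i. t \<le> \<bar>Phi G i V B T\<bar>} \<subseteq> (\<Union>j\<in>{..D}. {T\<in>sub G i. s \<le> \<bar>Phi G i (Cl j) B T\<bar>})"
  proof
    fix T assume T: "T \<in> {T\<in>sub G i. t \<le> \<bar>Phi G i V B T\<bar>}"
    show "T \<in> (\<Union>j\<in>{..D}. {T\<in>sub G i. s \<le> \<bar>Phi G i (Cl j) B T\<bar>})"
    proof (rule ccontr)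
      assume nt: "\<not> ?thesis"
      have lt: "\<bar>Phi G i (Cl j) B T\<bar> < s" if "j \<in> {..D}" for j
      proof -
        have "T \<notin> {T\<in>sub G i. s \<le> \<bar>Phi G i (Cl j) B T\<bar>}" using nt that by blast
        then show ?thesis using T by auto
      qed
      have "\<bar>Phi G i V B T\<bar> \<le> (\<Sum>j\<in>{..D}. \<bar>Phi G i (Cl j) B T\<bar>)"
        unfolding split by (rule sum_abs)
      also have "\<dots> < (\<Sum>j\<in>{..D}. s)"
        by (rule sum_strict_mono) (use lt in auto)
      also have "\<dots> = t" by (simp add: s_def)
      finally show False using T by simp
    qed
  qed
  have "card {T\<in>sub G i. t \<le> \<bar>Phi G i V B T\<bar>} \<le> card (\<Union>j\<in>{..D}. {T\<in>sub G i. s \<le> \<bar>Phi G i (Cl j) B T\<bar>})"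
    by (rule card_mono[OF _ sub]) (use fin in auto)
  also have "\<dots> \<le> (\<Sum>j\<in>{..D}. card {T\<in>sub G i. s \<le> \<bar>Phi G i (Cl j) B T\<bar>})"
    by (rule card_UN_le) simp
  finally have "real (card {T\<in>sub G i. t \<le> \<bar>Phi G i V B T\<bar>})
      \<le> (\<Sum>j\<in>{..D}. real (card {T\<in>sub G i. s \<le> \<bar>Phi G i (Cl j) B T\<bar>}))"
    by (simp flip: of_nat_sum)
  also have "\<dots> \<le> (\<Sum>j\<in>{..D}. 2 * real (card (sub G i)) * exp (- 2 * s\<^sup>2 / real (card V)))"
  proof (rule sum_mono)
    fix j assume "j \<in> {..D}"
    show "real (card {T\<in>sub G i. s \<le> \<bar>Phi G i (Cl j) B T\<bar>}) \<le> 2 * real (card (sub G i)) * exp (- 2 * s\<^sup>2 / real (card V))"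
    proof (rule class_bound[OF fin finV _ _ s])
      show "Cl j \<subseteq> V" by (auto simp: Cl_def)
      show "\<forall>u\<in>Cl j. \<forall>v\<in>Cl j. u \<noteq> v \<longrightarrow> B u \<inter> B v = {}" using col(2) unfolding Cl_def by fastforce
    qed
  qed
  also have "\<dots> = 2 * real (Suc D) * real (card (sub G i)) * exp (- 2 * (t / real (Suc D))\<^sup>2 / real (card V))"
    by (simp add: s_def)
  finally show ?thesis .
qed

definition tr :: "nat set set \<Rightarrow> nat \<Rightarrow> nat \<Rightarrow> nat set" where
  "tr S w v = (THE e. e \<in> S \<and> {w, v} \<subseteq> e)"

context
  fixes n :: nat and S :: "nat set set"
  assumes sts: "steiner_triple_system n S"
begin

lemma sts_edge: "e \<in> S \<Longrightarrow> e \<subseteq> {..<n} \<and> card e = 3 \<and> finite e"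
proof -
  assume "e \<in> S"
  then have "e \<subseteq> {..<n}" "card e = 3" using sts unfolding steiner_triple_system_def by auto
  then show ?thesis using card.infinite by fastforce
qed

lemma sts_finite: "finite S"
proof -
  have "S \<subseteq> Pow {..<n}" using sts_edge by auto
  then show ?thesis by (rule finite_subset) simp
qed

lemma tr_prop:
  assumes "w < n" "v < n" "w \<noteq> v"
  shows "tr S w v \<in> S" "{w, v} \<subseteq> tr S w v"
    "\<And>e. e \<in> S \<Longrightarrow> {w, v} \<subseteq> e \<Longrightarrow> e = tr S w v"
proof -
  have all: "\<forall>u<n. \<forall>v<n. u \<noteq> v \<longrightarrow> (\<exists>!e. e \<in> S \<and> {u, v} \<subseteq> e)"
    using sts unfolding steiner_triple_system_def by (elim conjE)
  have ex: "\<exists>!e. e \<in> S \<and> {w, v} \<subseteq> e" using all[rule_format, OF assms] .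
  have "tr S w v \<in> S \<and> {w, v} \<subseteq> tr S w v" unfolding tr_def by (rule theI'[OF ex])
  then show "tr S w v \<in> S" "{w, v} \<subseteq> tr S w v" by auto
  fix e assume "e \<in> S" "{w, v} \<subseteq> e"
  then show "e = tr S w v" unfolding tr_def using the1_equality[OF ex] by simp
qed

lemma tr_sym: "tr S w v = tr S v w"
  unfolding tr_def by (simp add: insert_commute)

lemma covered_iff:
  assumes "T \<subseteq> S" "w < n" "v < n" "w \<noteq> v"
  shows "(\<exists>e\<in>T. {w, v} \<subseteq> e) \<longleftrightarrow> tr S w v \<in> T"
proof
  assume "\<exists>e\<in>T. {w, v} \<subseteq> e"
  then obtain e where "e \<in> T" "{w, v} \<subseteq> e" by blast
  moreover then have "e = tr S w v" using tr_prop(3)[OF assms(2-4)] assms(1) by blast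
  ultimately show "tr S w v \<in> T" by simp
next
  assume "tr S w v \<in> T"
  then show "\<exists>e\<in>T. {w, v} \<subseteq> e" using tr_prop(2)[OF assms(2-4)] by blast
qed

definition pe :: "nat set \<Rightarrow> nat set set" where "pe e = sub e 2"

lemma card_pe: "e \<in> S \<Longrightarrow> card (pe e) = 3"
  using sts_edge[of e] by (simp add: pe_def card_sub numeral_3_eq_3 numeral_2_eq_2)

lemma pe_disj:
  assumes "e \<in> S" "e' \<in> S" "e \<noteq> e'"
  shows "pe e \<inter> pe e' = {}"
proof (rule ccontr)
  assume "pe e \<inter> pe e' \<noteq> {}"
  then obtain p where p: "p \<subseteq> e" "p \<subseteq> e'" "card p = 2" by (auto simp: pe_def sub_def)
  then obtain u v where uv: "p = {u, v}" "u \<noteq> v" by (auto simp: card_2_iff)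
  have "u < n" "v < n" using p uv sts_edge[OF assms(1)] by auto
  have "{u, v} \<subseteq> e" "{u, v} \<subseteq> e'" using p uv by auto
  then have "e = tr S u v" "e' = tr S u v" using tr_prop(3)[OF \<open>u < n\<close> \<open>v < n\<close> uv(2)] assms by auto
  then show False using assms by simp
qed

lemma leave_edges_eq:
  assumes T: "set xs \<subseteq> S"
  shows "leave_edges n xs = sub {..<n} 2 - (\<Union>e\<in>set xs. pe e)"
proof (rule set_eqI, rule iffI)
  fix p assume "p \<in> leave_edges n xs"
  then obtain u v where "p = {u, v}" "leave_adj n xs u v" unfolding leave_edges_def by blast
  then show "p \<in> sub {..<n} 2 - (\<Union>e\<in>set xs. pe e)"
    unfolding leave_adj_def sub_def pe_def by auto
next
  fix p assume p: "p \<in> sub {..<n} 2 - (\<Union>e\<in>set xs. pe e)"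
  then have "card p = 2" "p \<subseteq> {..<n}" by (auto simp: sub_def)
  then obtain u v where uv: "p = {u, v}" "u \<noteq> v" by (auto simp: card_2_iff)
  have "leave_adj n xs u v" using p uv unfolding leave_adj_def sub_def pe_def by auto
  then show "p \<in> leave_edges n xs" using uv unfolding leave_edges_def by blast
qed

lemma card_union_pe:
  assumes T: "T \<subseteq> S"
  shows "card (\<Union>e\<in>T. pe e) = 3 * card T"
proof -
  have finT: "finite T" using T sts_finite finite_subset by blast
  have "card (\<Union>e\<in>T. pe e) = (\<Sum>e\<in>T. card (pe e))"
  proof (rule card_UN_disjoint[OF finT])
    show "\<forall>i\<in>T. finite (pe i)" using T sts_edge by (auto simp: pe_def)
    show "\<forall>i\<in>T. \<forall>j\<in>T. i \<noteq> j \<longrightarrow> pe i \<inter> pe j = {}" using T pe_disj by blast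
  qed
  also have "\<dots> = (\<Sum>e\<in>T. 3)" using T card_pe by (intro sum.cong) auto
  finally show ?thesis by simp
qed

lemma union_pe_sub: "T \<subseteq> S \<Longrightarrow> (\<Union>e\<in>T. pe e) \<subseteq> sub {..<n} 2"
  using sts_edge unfolding pe_def sub_def by blast

lemma card_S: "n choose 2 = 3 * card S"
proof -
  have "(\<Union>e\<in>S. pe e) = sub {..<n} 2"
  proof (rule antisym[OF union_pe_sub[OF order_refl]], rule subsetI)
    fix p assume "p \<in> sub {..<n} 2"
    then have p: "card p = 2" "p \<subseteq> {..<n}" by (auto simp: sub_def)
    then obtain u v where uv: "p = {u, v}" "u \<noteq> v" by (auto simp: card_2_iff)
    have "u < n" "v < n" using p uv by auto
    then show "p \<in> (\<Union>e\<in>S. pe e)" using tr_prop[of u v] uv p unfolding pe_def sub_def by blast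
  qed
  then have "card (sub {..<n} 2) = 3 * card S" using card_union_pe[OF order_refl] by simp
  then show ?thesis by (simp add: card_sub)
qed

lemma density_eq:
  assumes T: "set xs \<subseteq> S"
  shows "leave_density n xs = (real (card S) - real (card (set xs))) / real (card S)"
proof -
  have c: "card (leave_edges n xs) = (n choose 2) - 3 * card (set xs)"
  proof -
    have f: "finite (\<Union>e\<in>set xs. pe e)" using finite_subset[OF union_pe_sub[OF T]] by simp
    show ?thesis unfolding leave_edges_eq[OF T] card_Diff_subset[OF f union_pe_sub[OF T]] card_union_pe[OF T]
      by (simp add: card_sub)
  qed
  have le: "card (set xs) \<le> card S" using T sts_finite by (rule card_mono[rotated])
  have e: "card (leave_edges n xs) = 3 * (card S - card (set xs))" unfolding c card_S by simp
  have "real (card (leave_edges n xs)) = 3 * (real (card S) - real (card (set xs)))"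
    unfolding e using le by (simp add: of_nat_diff)
  then show ?thesis unfolding leave_density_def card_S
    by (cases "card S = 0") (simp_all add: field_simps)
qed

definition Bv :: "nat set \<Rightarrow> nat \<Rightarrow> nat set set" where
  "Bv A v = (\<lambda>w. tr S w v) ` A"

lemma common_nbhd_eq:
  assumes T: "set xs \<subseteq> S" and A: "A \<subseteq> {..<n}"
  shows "common_nbhd n xs A = {v\<in>{..<n} - A. Bv A v \<inter> set xs = {}}"
proof (rule set_eqI, rule iffI)
  fix v assume "v \<in> common_nbhd n xs A"
  then have v: "v < n" "\<forall>w\<in>A. leave_adj n xs w v" unfolding common_nbhd_def by auto
  have "v \<notin> A" using v by (auto simp: leave_adj_def)
  moreover have "tr S w v \<notin> set xs" if "w \<in> A" for w
    using v that covered_iff[OF T, of w v] A unfolding leave_adj_def by auto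
  ultimately show "v \<in> {v\<in>{..<n} - A. Bv A v \<inter> set xs = {}}" using v by (auto simp: Bv_def)
next
  fix v assume v: "v \<in> {v\<in>{..<n} - A. Bv A v \<inter> set xs = {}}"
  have "leave_adj n xs w v" if "w \<in> A" for w
  proof -
    have "w < n" "w \<noteq> v" using that A v by auto
    moreover have "tr S w v \<notin> set xs" using v that by (auto simp: Bv_def)
    ultimately show ?thesis using covered_iff[OF T, of w v] v unfolding leave_adj_def by auto
  qed
  then show "v \<in> common_nbhd n xs A" using v unfolding common_nbhd_def by auto
qed

lemma card_cn_sum:
  assumes T: "set xs \<subseteq> S" and A: "A \<subseteq> {..<n}"
  shows "real (card (common_nbhd n xs A)) = (\<Sum>v\<in>{..<n} - A. Yv (Bv A v) (set xs))"
proof -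
  have "real (card (common_nbhd n xs A)) = real (card {v\<in>{..<n} - A. Bv A v \<inter> set xs = {}})"
    unfolding common_nbhd_eq[OF T A] ..
  also have "\<dots> = (\<Sum>v\<in>{v\<in>{..<n} - A. Bv A v \<inter> set xs = {}}. 1)" by simp
  also have "\<dots> = (\<Sum>v\<in>{..<n} - A. Yv (Bv A v) (set xs))"
    unfolding Yv_def by (rule sum.inter_filter) simp
  finally show ?thesis .
qed

lemma Bv_sub: "A \<subseteq> {..<n} \<Longrightarrow> v < n \<Longrightarrow> v \<notin> A \<Longrightarrow> Bv A v \<subseteq> S"
  unfolding Bv_def using tr_prop(1) by blast

lemma card_Bv_le: "finite A \<Longrightarrow> card (Bv A v) \<le> card A"
  unfolding Bv_def by (rule card_image_le)

lemma Bv_deg: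
  assumes A: "A \<subseteq> {..<n}" and v: "v \<in> {..<n} - A"
  shows "card {u\<in>{..<n} - A. u \<noteq> v \<and> Bv A u \<inter> Bv A v \<noteq> {}} \<le> 3 * card A"
proof -
  have finA: "finite A" using A finite_subset by blast
  have "{u\<in>{..<n} - A. u \<noteq> v \<and> Bv A u \<inter> Bv A v \<noteq> {}} \<subseteq> \<Union>(Bv A v)"
  proof
    fix u assume u: "u \<in> {u\<in>{..<n} - A. u \<noteq> v \<and> Bv A u \<inter> Bv A v \<noteq> {}}"
    then obtain w where w: "w \<in> A" "tr S w u \<in> Bv A v" unfolding Bv_def by blast
    have "u \<in> tr S w u" using tr_prop(2)[of w u] u w A by auto
    then show "u \<in> \<Union>(Bv A v)" using w by blast
  qed
  then have "card {u\<in>{..<n} - A. u \<noteq> v \<and> Bv A u \<inter> Bv A v \<noteq> {}} \<le> card (\<Union>(Bv A v))"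
    by (intro card_mono) (use Bv_sub[OF A] v sts_edge finA in \<open>auto simp: Bv_def\<close>)
  also have "\<dots> \<le> sum card (Bv A v)" by (rule card_Union_le_sum_card)
  also have "\<dots> = (\<Sum>e\<in>Bv A v. 3)" using Bv_sub[OF A] v sts_edge by (intro sum.cong) auto
  also have "\<dots> = 3 * card (Bv A v)" by simp
  also have "\<dots> \<le> 3 * card A" using card_Bv_le[OF finA] by simp
  finally show ?thesis .
qed

definition ExV :: "nat set \<Rightarrow> nat set" where
  "ExV A = (\<Union>w\<in>A. \<Union>w'\<in>A - {w}. tr S w w')"

lemma card_Ex: "A \<subseteq> {..<n} \<Longrightarrow> card (ExV A) \<le> 3 * card A * card A"
proof -
  assume A: "A \<subseteq> {..<n}"
  have finA: "finite A" using A finite_subset by blast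
  have "card (ExV A) \<le> (\<Sum>w\<in>A. card (\<Union>w'\<in>A - {w}. tr S w w'))"
    unfolding ExV_def by (rule card_UN_le[OF finA])
  also have "\<dots> \<le> (\<Sum>w\<in>A. \<Sum>w'\<in>A - {w}. card (tr S w w'))"
    by (intro sum_mono card_UN_le) (use finA in auto)
  also have "\<dots> = (\<Sum>w\<in>A. \<Sum>w'\<in>A - {w}. 3)"
    using A sts_edge tr_prop(1) by (intro sum.cong refl) (auto simp: subset_iff)
  also have "\<dots> \<le> (\<Sum>w\<in>A. 3 * card A)"
    by (intro sum_mono) (simp add: card_Diff_subset finA)
  finally show ?thesis by simp
qed

lemma card_Bv_generic:
  assumes A: "A \<subseteq> {..<n}" and v: "v \<in> {..<n} - A" "v \<notin> ExV A"
  shows "card (Bv A v) = card A"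
proof -
  have "inj_on (\<lambda>w. tr S w v) A"
  proof (rule inj_onI, rule ccontr)
    fix w w' assume w: "w \<in> A" "w' \<in> A" "tr S w v = tr S w' v" "w \<noteq> w'"
    have "{w, v} \<subseteq> tr S w v" "{w', v} \<subseteq> tr S w' v" using tr_prop(2) w A v by auto
    then have "{w, w'} \<subseteq> tr S w v" using w by auto
    then have "tr S w v = tr S w w'" using tr_prop(3)[of w w' "tr S w v"] tr_prop(1)[of w v] w A v by auto
    then have "v \<in> tr S w w'" using tr_prop(2)[of w v] w A v by auto
    then show False using v w unfolding ExV_def by blast
  qed
  then show ?thesis unfolding Bv_def by (rule card_image)
qed

end

lemma pow_diff_le:
  fixes a b :: real
  assumes "0 \<le> b" "b \<le> a" "a \<le> 1"
  shows "a ^ k - b ^ k \<le> real k * (a - b)"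
proof (induction k)
  case 0 then show ?case by simp
next
  case (Suc k)
  have "a ^ Suc k - b ^ Suc k = a * (a ^ k - b ^ k) + b ^ k * (a - b)"
    by (simp add: algebra_simps)
  also have "a * (a ^ k - b ^ k) \<le> 1 * (real k * (a - b))"
  proof (rule mult_mono)
    show "a ^ k - b ^ k \<le> real k * (a - b)" by (rule Suc.IH)
    show "0 \<le> a ^ k - b ^ k" using assms by (simp add: power_mono)
  qed (use assms in auto)
  also have "b ^ k * (a - b) \<le> 1 * (a - b)"
    by (rule mult_right_mono) (use assms in \<open>auto intro: power_le_one\<close>)
  finally show ?case by (simp add: algebra_simps)
qed

lemma binom_step:
  fixes M u i :: nat
  assumes "u < M"
  shows "real (M - Suc u choose i) * real (M - u) = real (M - u choose i) * real (M - u - i)"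
proof -
  have "(M - u - i) * (M - u choose i) = (M - u) * ((M - u - 1) choose i)"
    by (rule binomial_absorb_comp)
  moreover have "M - u - 1 = M - Suc u" by simp
  ultimately have "(M - Suc u choose i) * (M - u) = (M - u choose i) * (M - u - i)"
    by (simp add: mult.commute)
  then show ?thesis by (metis of_nat_mult)
qed

lemma f_bounds:
  fixes N i k :: nat
  assumes ik: "i + k \<le> N" and N: "0 < N"
  defines "d \<equiv> (real N - real i) / real N"
  shows "(d - real k / real N) ^ k \<le> real (N - k choose i) / real (N choose i)"
    "real (N - k choose i) / real (N choose i) \<le> d ^ k"
proof -
  define g where "g u = real (N - u choose i) / real (N choose i)" for u
  have Cpos: "real (N choose i) > 0" using ik by simp
  have ikr: "real i + real k \<le> real N" using ik by (simp flip: of_nat_add)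
  have e: "d - real k / real N = (real N - real i - real k) / real N"
    using N by (simp add: d_def diff_divide_distrib)
  have dk: "0 \<le> d - real k / real N"
    unfolding e using ikr by simp
  have d1: "d \<le> 1" using N by (simp add: d_def)
  have d0: "0 \<le> d" using dk by (smt (verit) divide_nonneg_nonneg of_nat_0_le_iff)
  have "u \<le> k \<longrightarrow> (d - real k / real N) ^ u \<le> g u \<and> g u \<le> d ^ u" for u
  proof (induction u)
    case 0 then show ?case using Cpos by (simp add: g_def)
  next
    case (Suc u)
    show ?case
    proof
      assume u: "Suc u \<le> k"
      then have IH: "(d - real k / real N) ^ u \<le> g u" "g u \<le> d ^ u" using Suc.IH by auto
      define r where "r = real (N - u - i) / real (N - u)"
      have uN: "u < N" using u ik by simp
      have NU: "real (N - u) > 0" using uN by simp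
      have bs: "real (N - Suc u choose i) = real (N - u choose i) * real (N - u - i) / real (N - u)"
        using binom_step[OF uN, of i] NU by (simp only: eq_divide_eq) simp
      have gs: "g (Suc u) = g u * r"
        unfolding g_def r_def bs by simp
      have r0: "0 \<le> r" by (simp add: r_def)
      have rd: "r \<le> d"
      proof -
        have "real (N - u - i) * real N \<le> (real N - real i) * real (N - u)"
          using u ik by (simp add: of_nat_diff algebra_simps)
        then show ?thesis using NU N by (simp add: r_def d_def field_simps)
      qed
      have dr: "d - real k / real N \<le> r"
      proof -
        have "real (N - u - i) / real N \<le> r"
          unfolding r_def using NU uN by (intro divide_left_mono) auto
        moreover have "d - real k / real N \<le> real (N - u - i) / real N"
          using u ik N by (simp add: d_def of_nat_diff field_simps)
        ultimately show ?thesis by simp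
      qed
      have g0: "0 \<le> g u" by (simp add: g_def)
      show "(d - real k / real N) ^ Suc u \<le> g (Suc u) \<and> g (Suc u) \<le> d ^ Suc u"
      proof
        show "(d - real k / real N) ^ Suc u \<le> g (Suc u)"
          unfolding gs power_Suc by (subst mult.commute) (intro mult_mono IH(1) dr dk zero_le_power g0)
        show "g (Suc u) \<le> d ^ Suc u"
          unfolding gs power_Suc by (subst mult.commute[of d]) (intro mult_mono IH(2) rd g0 r0 zero_le_power d0)
      qed
    qed
  qed
  then show "(d - real k / real N) ^ k \<le> real (N - k choose i) / real (N choose i)"
    "real (N - k choose i) / real (N choose i) \<le> d ^ k"
    by (auto simp: g_def)
qed

context
  fixes n :: nat and S :: "nat set set"
  assumes sts: "steiner_triple_system n S"
begin

lemma avg_Bv: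
  assumes A: "A \<subseteq> {..<n}" and v: "v \<in> {..<n} - A"
  shows "avg S i (Yv (Bv S A v)) = real (card S - card (Bv S A v) choose i) / real (card S choose i)"
proof -
  have B: "Bv S A v \<subseteq> S" using Bv_sub[OF sts A] v by auto
  have fB: "finite (Bv S A v)" using B sts_finite[OF sts] finite_subset by blast
  show ?thesis unfolding avg_Yv[OF sts_finite[OF sts]] card_sub[OF sts_finite[OF sts]]
      card_sub[OF finite_Diff[OF sts_finite[OF sts]]] card_Diff_subset[OF fB B] ..
qed

lemma mu_bound:
  assumes A: "A \<subseteq> {..<n}" and ik: "i + card A \<le> card S" and nN: "n \<le> card S"
  shows "\<bar>(\<Sum>v\<in>{..<n} - A. avg S i (Yv (Bv S A v)))
          - real n * ((real (card S) - real i) / real (card S)) ^ card A\<bar>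
         \<le> 4 * real (card A) ^ 2 + real (card A)"
proof (cases "n = 0")
  case True then show ?thesis by simp
next
  case False
  define k where "k = card A"
  define N where "N = card S"
  define d where "d = (real N - real i) / real N"
  define f where "f = real (N - k choose i) / real (N choose i)"
  define V where "V = {..<n} - A"
  define p where "p v = avg S i (Yv (Bv S A v))" for v
  define X where "X = ExV S A"
  have finA: "finite A" using A finite_subset by blast
  have Npos: "0 < N" using False nN by (simp add: N_def)
  have ik': "i + k \<le> N" using ik by (simp add: k_def N_def)
  have fb1: "(d - real k / real N) ^ k \<le> f" "f \<le> d ^ k"
    using f_bounds[OF ik' Npos] by (simp_all add: f_def d_def)
  have dk: "0 \<le> d - real k / real N" and d1: "d \<le> 1"
  proof -
    have ikr: "real i + real k \<le> real N" using ik' by (simp flip: of_nat_add)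
    have e: "d - real k / real N = (real N - real i - real k) / real N"
      using Npos by (simp add: d_def diff_divide_distrib)
    show "0 \<le> d - real k / real N" unfolding e using ikr by simp
    show "d \<le> 1" using Npos by (simp add: d_def)
  qed
  have d0: "0 \<le> d" using dk by (smt (verit) divide_nonneg_nonneg of_nat_0_le_iff)
  have f0: "0 \<le> f" by (simp add: f_def)
  have dkf: "d ^ k - f \<le> real k * (real k / real N)"
  proof -
    have "d ^ k - (d - real k / real N) ^ k \<le> real k * (d - (d - real k / real N))"
      by (rule pow_diff_le[OF dk]) (use d1 in auto)
    then show ?thesis using fb1 by simp
  qed
  have p01: "0 \<le> p v" "p v \<le> 1" for v using avg_Yv_bounds[OF sts_finite[OF sts]] by (auto simp: p_def)
  have pgen: "p v = f" if "v \<in> V - X" for v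
    using that avg_Bv[OF A, of v i] card_Bv_generic[OF sts A, of v]
    by (simp add: p_def f_def V_def X_def k_def N_def)
  have finV: "finite V" by (simp add: V_def)
  have cV: "card V = n - k" unfolding V_def k_def using A finA by (simp add: card_Diff_subset)
  have cX: "card X \<le> 3 * k * k" unfolding X_def k_def by (rule card_Ex[OF sts A])
  have finX: "finite X"
  proof -
    have tn: "tr S w w' \<subseteq> {..<n}" if "w \<in> A" "w' \<in> A - {w}" for w w'
    proof -
      have "w < n" "w' < n" "w \<noteq> w'" using that A by auto
      then show ?thesis using sts_edge[OF sts tr_prop(1)[OF sts]] by blast
    qed
    have "X \<subseteq> {..<n}" unfolding X_def ExV_def[OF sts] using tn by blast
    then show ?thesis by (rule finite_subset) simp
  qed
  have cXr0: "real (card X) \<le> real (3 * k * k)" using cX by (simp only: of_nat_le_iff)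
  then have cXr: "real (card X) \<le> 3 * (real k * real k)" by simp
  define G where "G = real (card (V - X))"
  have sumV: "(\<Sum>v\<in>V. p v) = G * f + (\<Sum>v\<in>V \<inter> X. p v)"
  proof -
    have "(\<Sum>v\<in>V. p v) = (\<Sum>v\<in>V - X. p v) + (\<Sum>v\<in>V \<inter> X. p v)"
      using sum.Int_Diff[OF finV, of p X] by simp
    also have "(\<Sum>v\<in>V - X. p v) = (\<Sum>v\<in>V - X. f)" by (rule sum.cong) (use pgen in auto)
    finally show ?thesis by (simp add: G_def)
  qed
  have Q0: "0 \<le> (\<Sum>v\<in>V \<inter> X. p v)" by (intro sum_nonneg) (use p01 in auto)
  have Q1: "(\<Sum>v\<in>V \<inter> X. p v) \<le> real (card X)"
  proof -
    have "(\<Sum>v\<in>V \<inter> X. p v) \<le> (\<Sum>v\<in>V \<inter> X. 1)" by (intro sum_mono) (use p01 in auto)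
    also have "\<dots> = real (card (V \<inter> X))" by simp
    also have "\<dots> \<le> real (card X)" using finX by (simp add: card_mono)
    finally show ?thesis .
  qed
  have Gn: "G \<le> real n"
  proof -
    have "card (V - X) \<le> card V" using finV by (intro card_mono) auto
    then show ?thesis using cV by (simp add: G_def)
  qed
  have Glow: "real n - G \<le> real k + 3 * (real k * real k)"
  proof -
    have "V \<subseteq> (V - X) \<union> X" by auto
    then have "card V \<le> card ((V - X) \<union> X)" using finV finX by (intro card_mono) auto
    also have "\<dots> \<le> card (V - X) + card X" by (rule card_Un_le)
    finally have "card V \<le> card (V - X) + card X" .
    then have "real (n - k) \<le> G + real (card X)" using cV by (simp add: G_def flip: of_nat_add)
    moreover note cXr
    moreover have "real n - real k \<le> real (n - k)" by simp
    ultimately show ?thesis by linarith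
  qed
  have F1: "G * f \<le> real n * d ^ k"
    by (rule mult_mono[OF Gn fb1(2)]) (use f0 in \<open>auto simp: G_def\<close>)
  have F2: "(real n - G) * d ^ k \<le> (real n - G)"
    using mult_left_mono[of "d ^ k" 1 "real n - G"] Gn d0 d1 power_le_one by auto
  have F3: "G * (d ^ k - f) \<le> real n * (real k * (real k / real N))"
    by (rule mult_mono[OF Gn dkf]) (use fb1 in \<open>auto simp: G_def\<close>)
  have F4: "real n * (real k * (real k / real N)) \<le> real k * real k"
  proof -
    have "real n / real N \<le> 1" using nN Npos by (simp add: N_def)
    then have "real n / real N * (real k * real k) \<le> 1 * (real k * real k)"
      by (intro mult_right_mono) auto
    then show ?thesis by (simp add: field_simps)
  qed
  have id: "real n * d ^ k - G * f = (real n - G) * d ^ k + G * (d ^ k - f)" by (simp add: algebra_simps)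
  have "(\<Sum>v\<in>V. p v) - real n * d ^ k \<le> 3 * (real k * real k)"
    using sumV Q1 F1 cXr by linarith
  moreover have "real n * d ^ k - (\<Sum>v\<in>V. p v) \<le> 4 * (real k * real k) + real k"
    using sumV Q0 F2 F3 F4 Glow id by linarith
  ultimately show ?thesis
    unfolding V_def[symmetric] p_def[symmetric] N_def[symmetric] d_def[symmetric] k_def[symmetric]
    by (simp add: abs_le_iff power2_eq_square)
qed

lemma bad_count:
  fixes eps :: real and A :: "nat set" and i :: nat
  defines "dd \<equiv> (real (card S) - real i) / real (card S)"
  defines "X \<equiv> (\<lambda>T. \<Sum>v\<in>{..<n} - A. Yv (Bv S A v) T)"
  defines "K0 \<equiv> 4 * real (card A) ^ 2 + real (card A)"
  assumes A: "A \<subseteq> {..<n}" and ik: "i + card A \<le> card S" and nN: "n \<le> card S"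
    and t: "K0 < eps * dd ^ card A * real n"
  shows "real (card {T\<in>sub S i. \<not> ((1 - eps) * dd ^ card A * real n \<le> X T \<and> X T \<le> (1 + eps) * dd ^ card A * real n)})
     \<le> 2 * real (Suc (3 * card A)) * real (card (sub S i))
        * exp (- 2 * ((eps * dd ^ card A * real n - K0) / real (Suc (3 * card A)))\<^sup>2 / real n)"
proof -
  define V where "V = {..<n} - A"
  define B where "B = Bv S A"
  define t0 where "t0 = eps * dd ^ card A * real n - K0"
  define mu where "mu = (\<Sum>v\<in>V. avg S i (Yv (B v)))"
  have t0: "t0 > 0" using t by (simp add: t0_def)
  have mub: "\<bar>mu - real n * dd ^ card A\<bar> \<le> K0"
    using mu_bound[OF A ik nN] by (simp add: mu_def V_def B_def dd_def K0_def)
  have finS: "finite S" by (rule sts_finite[OF sts])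
  have finV: "finite V" by (simp add: V_def)
  have XP: "X T = Phi S i V B T + mu" for T
    by (simp add: X_def Phi_def mu_def V_def B_def sum_subtractf)
  have sub1: "{T\<in>sub S i. \<not> ((1 - eps) * dd ^ card A * real n \<le> X T \<and> X T \<le> (1 + eps) * dd ^ card A * real n)}
      \<subseteq> {T\<in>sub S i. t0 \<le> \<bar>Phi S i V B T\<bar>}"
  proof (rule subsetI, unfold mem_Collect_eq, elim conjE, intro conjI)
    fix T assume T: "T \<in> sub S i" and bad: "\<not> ((1 - eps) * dd ^ card A * real n \<le> X T \<and> X T \<le> (1 + eps) * dd ^ card A * real n)"
    show "T \<in> sub S i" by (rule T)
    have e1: "(1 - eps) * dd ^ card A * real n = real n * dd ^ card A - eps * dd ^ card A * real n"
      by (simp add: algebra_simps)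
    have e2: "(1 + eps) * dd ^ card A * real n = real n * dd ^ card A + eps * dd ^ card A * real n"
      by (simp add: algebra_simps)
    show "t0 \<le> \<bar>Phi S i V B T\<bar>"
      using bad mub XP[of T] unfolding e1 e2 t0_def by (auto simp: abs_le_iff abs_if split: if_splits)
  qed
  have "real (card {T\<in>sub S i. \<not> ((1 - eps) * dd ^ card A * real n \<le> X T \<and> X T \<le> (1 + eps) * dd ^ card A * real n)})
      \<le> real (card {T\<in>sub S i. t0 \<le> \<bar>Phi S i V B T\<bar>})"
    by (rule of_nat_mono, rule card_mono[OF _ sub1]) (simp add: finS)
  also have "\<dots> \<le> 2 * real (Suc (3 * card A)) * real (card (sub S i)) * exp (- 2 * (t0 / real (Suc (3 * card A)))\<^sup>2 / real n)"
  proof (cases "V = {}")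
    case True
    then have "{T\<in>sub S i. t0 \<le> \<bar>Phi S i V B T\<bar>} = {}" using t0 by (auto simp: Phi_def)
    moreover have "0 \<le> 2 * real (Suc (3 * card A)) * real (card (sub S i)) * exp (- 2 * (t0 / real (Suc (3 * card A)))\<^sup>2 / real n)"
      by (intro mult_nonneg_nonneg) auto
    ultimately show ?thesis by (simp only: card.empty of_nat_0)
  next
    case False
    have deg: "\<forall>v\<in>V. card {u\<in>V. u \<noteq> v \<and> B u \<inter> B v \<noteq> {}} \<le> 3 * card A"
      using Bv_deg[OF sts A] by (simp add: V_def B_def)
    have "real (card {T\<in>sub S i. t0 \<le> \<bar>Phi S i V B T\<bar>})
        \<le> 2 * real (Suc (3 * card A)) * real (card (sub S i)) * exp (- 2 * (t0 / real (Suc (3 * card A)))\<^sup>2 / real (card V))"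
      by (rule conc_total[OF finS finV deg t0])
    also have "\<dots> \<le> 2 * real (Suc (3 * card A)) * real (card (sub S i)) * exp (- 2 * (t0 / real (Suc (3 * card A)))\<^sup>2 / real n)"
    proof -
      have cV: "0 < card V" using False finV by (simp add: card_gt_0_iff)
      have "card V \<le> n" unfolding V_def by (metis card_Diff_subset card_lessThan diff_le_self finite_subset A finite_lessThan)
      then have "2 * (t0 / real (Suc (3 * card A)))\<^sup>2 / real n \<le> 2 * (t0 / real (Suc (3 * card A)))\<^sup>2 / real (card V)"
        using cV by (intro divide_left_mono) auto
      then show ?thesis by (intro mult_left_mono) auto
    qed
    finally show ?thesis .
  qed
  finally show ?thesis unfolding t0_def .
qed

end

lemma orderings_eq: "orderings S = permutations_of_set S"
  unfolding orderings_def permutations_of_set_def by auto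

lemma fiber_card:
  assumes fin: "finite S" and T: "T \<in> sub S i"
  shows "card {xs \<in> orderings S. set (take i xs) = T} = fact i * fact (card S - i)"
proof -
  have TS: "T \<subseteq> S" "card T = i" using T by (auto simp: sub_def)
  have finT: "finite T" using TS fin finite_subset by blast
  have bij: "bij_betw (\<lambda>xs. (take i xs, drop i xs)) {xs \<in> orderings S. set (take i xs) = T}
      (permutations_of_set T \<times> permutations_of_set (S - T))"
  proof (rule bij_betw_byWitness[where f'="\<lambda>(ys, zs). ys @ zs"])
    show "\<forall>a\<in>{xs \<in> orderings S. set (take i xs) = T}. (\<lambda>(ys, zs). ys @ zs) (take i a, drop i a) = a"
      by simp
    show "\<forall>a'\<in>permutations_of_set T \<times> permutations_of_set (S - T).
        (take i ((\<lambda>(ys, zs). ys @ zs) a'), drop i ((\<lambda>(ys, zs). ys @ zs) a')) = a'"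
    proof
      fix p assume p: "p \<in> permutations_of_set T \<times> permutations_of_set (S - T)"
      then obtain ys zs where [simp]: "p = (ys, zs)" and ys: "set ys = T" "distinct ys" by (auto simp: permutations_of_set_def)
      have "length ys = i" using ys TS distinct_card by fastforce
      then show "(take i ((\<lambda>(ys, zs). ys @ zs) p), drop i ((\<lambda>(ys, zs). ys @ zs) p)) = p" by simp
    qed
    show "(\<lambda>xs. (take i xs, drop i xs)) ` {xs \<in> orderings S. set (take i xs) = T}
        \<subseteq> permutations_of_set T \<times> permutations_of_set (S - T)"
    proof
      fix p assume "p \<in> (\<lambda>xs. (take i xs, drop i xs)) ` {xs \<in> orderings S. set (take i xs) = T}"
      then obtain xs where xs: "p = (take i xs, drop i xs)" "distinct xs" "set xs = S" "set (take i xs) = T"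
        by (auto simp: orderings_def)
      have d: "distinct (take i xs @ drop i xs)" using xs by simp
      then have "set (take i xs) \<inter> set (drop i xs) = {}" by (simp only: distinct_append)
      moreover have "set (take i xs) \<union> set (drop i xs) = S" using xs(3) by (metis append_take_drop_id set_append)
      ultimately have "set (drop i xs) = S - T" using xs(4) by blast
      then show "p \<in> permutations_of_set T \<times> permutations_of_set (S - T)"
        using xs d by (auto simp: permutations_of_set_def)
    qed
    show "(\<lambda>(ys, zs). ys @ zs) ` (permutations_of_set T \<times> permutations_of_set (S - T))
        \<subseteq> {xs \<in> orderings S. set (take i xs) = T}"
    proof
      fix xs assume "xs \<in> (\<lambda>(ys, zs). ys @ zs) ` (permutations_of_set T \<times> permutations_of_set (S - T))"
      then obtain ys zs where xs: "xs = ys @ zs" "set ys = T" "distinct ys" "set zs = S - T" "distinct zs"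
        by (auto simp: permutations_of_set_def)
      have "length ys = i" using xs TS distinct_card by fastforce
      then show "xs \<in> {xs \<in> orderings S. set (take i xs) = T}"
        using xs TS by (auto simp: orderings_def)
    qed
  qed
  have "card {xs \<in> orderings S. set (take i xs) = T} = card (permutations_of_set T \<times> permutations_of_set (S - T))"
    by (rule bij_betw_same_card[OF bij])
  also have "\<dots> = fact i * fact (card S - i)"
    using fin finT TS by (simp add: card_cartesian_product card_Diff_subset)
  finally show ?thesis .
qed

lemma prob_subsets:
  assumes fin: "finite S" and Bad: "Bad \<subseteq> sub S i" and i: "i \<le> card S"
  shows "measure_pmf.prob (pmf_of_set (orderings S)) {xs. set (take i xs) \<in> Bad}
         = real (card Bad) / real (card (sub S i))"
proof -
  have ne: "orderings S \<noteq> {}" "finite (orderings S)" using fin by (auto simp: orderings_eq)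
  have finB: "finite Bad" using Bad fin finite_subset finite_sub by blast
  have eq: "orderings S \<inter> {xs. set (take i xs) \<in> Bad} = (\<Union>T\<in>Bad. {xs \<in> orderings S. set (take i xs) = T})"
    by auto
  have "card (orderings S \<inter> {xs. set (take i xs) \<in> Bad}) = (\<Sum>T\<in>Bad. card {xs \<in> orderings S. set (take i xs) = T})"
    unfolding eq by (rule card_UN_disjoint[OF finB]) (use ne in auto)
  also have "\<dots> = (\<Sum>T\<in>Bad. fact i * fact (card S - i))"
    by (intro sum.cong refl fiber_card[OF fin]) (use Bad in auto)
  finally have c: "card (orderings S \<inter> {xs. set (take i xs) \<in> Bad}) = card Bad * (fact i * fact (card S - i))"
    by simp
  have co: "card (orderings S) = fact (card S)" using fin by (simp add: orderings_eq)
  have "measure_pmf.prob (pmf_of_set (orderings S)) {xs. set (take i xs) \<in> Bad}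
      = real (card Bad * (fact i * fact (card S - i))) / real (fact (card S))"
    using measure_pmf_of_set[OF ne] c co by simp
  also have "\<dots> = real (card Bad) / real (card (sub S i))"
  proof -
    have "fact i * fact (card S - i) * (card S choose i) = fact (card S)"
      by (rule binomial_fact_lemma[OF i])
    then have "real (fact (card S)) = real (fact i * fact (card S - i)) * real (card (sub S i))"
      by (simp add: card_sub fin flip: of_nat_mult)
    moreover have "real (fact i * fact (card S - i)) > 0" by simp
    ultimately show ?thesis by (simp add: field_simps)
  qed
  finally show ?thesis .
qed

context
  fixes n :: nat and S :: "nat set set"
  assumes sts: "steiner_triple_system n S"
begin

lemma ps_subset:
  assumes H: "H \<subseteq> S"
  shows "partial_system n H"
  unfolding partial_system_def
proof (intro conjI allI impI ballI)
  fix e assume "e \<in> H"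
  then show "e \<subseteq> {..<n}" "card e = 3" using sts_edge[OF sts] H by auto
next
  fix u v assume uv: "u < n" "v < n" "u \<noteq> v"
  have "{e \<in> H. {u, v} \<subseteq> e} \<subseteq> {tr S u v}" using tr_prop(3)[OF sts uv] H by auto
  then have "card {e \<in> H. {u, v} \<subseteq> e} \<le> card {tr S u v}" by (intro card_mono) auto
  then show "card {e \<in> H. {u, v} \<subseteq> e} \<le> 1" by simp
qed

lemma per_term:
  fixes eps q :: real and A :: "nat set" and i h :: nat
  assumes A: "A \<subseteq> {..<n}" and kh: "card A \<le> h" and ik: "i + card A \<le> card S"
    and nN: "n \<le> card S" and npos: "0 < n" and eps: "0 \<le> eps"
    and q0: "0 \<le> q" and dq: "q \<le> ((real (card S) - real i) / real (card S)) ^ card A"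
    and big: "4 * real h ^ 2 + real h < q * eps * real n / 2"
  shows "real (card {T\<in>sub S i. \<not> ((1 - eps) * ((real (card S) - real i) / real (card S)) ^ card A * real n
              \<le> (\<Sum>v\<in>{..<n} - A. Yv (Bv S A v) T) \<and>
            (\<Sum>v\<in>{..<n} - A. Yv (Bv S A v) T) \<le> (1 + eps) * ((real (card S) - real i) / real (card S)) ^ card A * real n)})
         / real (card (sub S i))
      \<le> 2 * real (Suc (3 * h)) * exp (- 2 * ((q * eps * real n / 2) / real (Suc (3 * h)))\<^sup>2 / real n)"
proof -
  define k where "k = card A"
  define dd where "dd = (real (card S) - real i) / real (card S)"
  define t1 where "t1 = q * eps * real n / 2"
  define Kk where "Kk = 4 * real k ^ 2 + real k"
  define K0 where "K0 = 4 * real h ^ 2 + real h"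
  have kh': "real k \<le> real h" using kh by (simp add: k_def)
  have KkK0: "Kk \<le> K0"
  proof -
    have "real k ^ 2 \<le> real h ^ 2" using kh' by (intro power_mono) auto
    then show ?thesis unfolding Kk_def K0_def using kh' by linarith
  qed
  have K00: "0 \<le> K0" by (simp add: K0_def)
  have t1K: "K0 < t1" using big by (simp add: t1_def K0_def)
  have en: "q * (eps * real n) \<le> dd ^ k * (eps * real n)"
    using dq eps by (intro mult_right_mono) (auto simp: dd_def k_def)
  have big2: "2 * t1 \<le> eps * dd ^ k * real n" using en by (simp add: t1_def algebra_simps)
  have t: "Kk < eps * dd ^ k * real n" using big2 t1K KkK0 K00 by linarith
  have bc: "real (card {T\<in>sub S i. \<not> ((1 - eps) * dd ^ k * real n \<le> (\<Sum>v\<in>{..<n} - A. Yv (Bv S A v) T) \<and>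
            (\<Sum>v\<in>{..<n} - A. Yv (Bv S A v) T) \<le> (1 + eps) * dd ^ k * real n)})
     \<le> 2 * real (Suc (3 * k)) * real (card (sub S i))
        * exp (- 2 * ((eps * dd ^ k * real n - Kk) / real (Suc (3 * k)))\<^sup>2 / real n)"
    using bad_count[OF sts A ik nN, of eps] t unfolding dd_def Kk_def k_def by simp
  have r1: "t1 / real (Suc (3 * h)) \<le> (eps * dd ^ k * real n - Kk) / real (Suc (3 * k))"
  proof -
    have "t1 \<le> eps * dd ^ k * real n - Kk" using big2 t1K KkK0 by linarith
    moreover have "real (Suc (3 * k)) \<le> real (Suc (3 * h))" using kh by (simp add: k_def)
    moreover have "0 \<le> t1" using t1K K00 by linarith
    ultimately show ?thesis by (intro frac_le) auto
  qed
  have r0: "0 \<le> t1 / real (Suc (3 * h))" using t1K K00 by simp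
  have sq: "(t1 / real (Suc (3 * h)))\<^sup>2 \<le> ((eps * dd ^ k * real n - Kk) / real (Suc (3 * k)))\<^sup>2"
    by (rule power_mono[OF r1 r0])
  have ex: "exp (- 2 * ((eps * dd ^ k * real n - Kk) / real (Suc (3 * k)))\<^sup>2 / real n)
      \<le> exp (- 2 * (t1 / real (Suc (3 * h)))\<^sup>2 / real n)"
    using sq npos by (simp add: divide_right_mono)
  have c2: "2 * real (Suc (3 * k)) \<le> 2 * real (Suc (3 * h))" using kh by (simp add: k_def)
  have cs: "real (card (sub S i)) > 0"
    using ik by (simp add: card_sub[OF sts_finite[OF sts]])
  have "2 * real (Suc (3 * k)) * real (card (sub S i))
        * exp (- 2 * ((eps * dd ^ k * real n - Kk) / real (Suc (3 * k)))\<^sup>2 / real n)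
     \<le> 2 * real (Suc (3 * h)) * real (card (sub S i)) * exp (- 2 * (t1 / real (Suc (3 * h)))\<^sup>2 / real n)"
    by (intro mult_mono ex c2 mult_right_mono) (use cs in auto)
  with bc have "real (card {T\<in>sub S i. \<not> ((1 - eps) * dd ^ k * real n \<le> (\<Sum>v\<in>{..<n} - A. Yv (Bv S A v) T) \<and>
            (\<Sum>v\<in>{..<n} - A. Yv (Bv S A v) T) \<le> (1 + eps) * dd ^ k * real n)})
      \<le> real (card (sub S i)) * (2 * real (Suc (3 * h)) * exp (- 2 * (t1 / real (Suc (3 * h)))\<^sup>2 / real n))"
    by (simp add: algebra_simps)
  then show ?thesis using cs unfolding dd_def[symmetric] k_def[symmetric] t1_def[symmetric]
    by (simp add: divide_le_eq mult.commute)
qed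

end

lemma two_choose2: "2 * (n choose 2) = n * (n - 1)"
proof (induction n)
  case 0 then show ?case by simp
next
  case (Suc n)
  have "Suc n choose 2 = n + (n choose 2)" by (simp add: numeral_2_eq_2)
  then show ?case using Suc by (cases n) (auto simp: algebra_simps)
qed

lemma count_A:
  assumes "0 < n"
  shows "card {A. A \<subseteq> {..<n} \<and> card A \<le> h} \<le> (h + 1) * n ^ h"
proof -
  have "{A. A \<subseteq> {..<n} \<and> card A \<le> h} \<subseteq> (\<Union>k\<in>{..h}. sub {..<n} k)"
    by (auto simp: sub_def)
  then have "card {A. A \<subseteq> {..<n} \<and> card A \<le> h} \<le> card (\<Union>k\<in>{..h}. sub {..<n} k)"
    by (intro card_mono) auto
  also have "\<dots> \<le> (\<Sum>k\<in>{..h}. card (sub {..<n} k))" by (rule card_UN_le) simp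
  also have "\<dots> \<le> (\<Sum>k\<in>{..h}. n ^ h)"
  proof (rule sum_mono)
    fix k assume k: "k \<in> {..h}"
    have "n choose k \<le> n ^ k"
      using binomial_fact_pow[of n k] by (metis dual_order.trans fact_ge_1 mult.right_neutral mult_le_mono2)
    also have "n ^ k \<le> n ^ h" using k assms by (intro power_increasing) auto
    finally show "card (sub {..<n} k) \<le> n ^ h" by (simp add: card_sub)
  qed
  also have "\<dots> = (h + 1) * n ^ h" by simp
  finally show ?thesis .
qed

lemma final_ineq:
  fixes x Kc c1 b :: real and H :: nat
  assumes x: "0 < x" and Kc: "0 < Kc"
    and lt: "(ln Kc + real H * ln x) / x powr b < c1 / 2"
  shows "Kc * x ^ H * exp (- c1 * x powr b) \<le> exp (- (c1 / 2) * x powr b)"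
proof -
  have xb: "0 < x powr b" using x by simp
  have "ln Kc + real H * ln x < c1 / 2 * x powr b" using lt xb by (simp add: divide_less_eq)
  then have "exp (ln Kc + real H * ln x) < exp (c1 / 2 * x powr b)" by simp
  moreover have "exp (ln Kc + real H * ln x) = Kc * x ^ H"
    using x Kc by (simp add: exp_add exp_of_nat_mult)
  ultimately have "Kc * x ^ H < exp (c1 / 2 * x powr b)" by simp
  then have "Kc * x ^ H * exp (- c1 * x powr b) \<le> exp (c1 / 2 * x powr b) * exp (- c1 * x powr b)"
    by (intro mult_right_mono) auto
  also have "\<dots> = exp (- (c1 / 2) * x powr b)" by (simp flip: exp_add)
  finally show ?thesis .
qed

context
  fixes n :: nat and S :: "nat set set"
  assumes sts: "steiner_triple_system n S"
begin

lemma main_bound: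
  fixes h :: nat and \<alpha> a :: real
  assumes al: "0 < \<alpha>" "\<alpha> < 1" and a: "0 < a"
    and n7: "7 \<le> n" and hn: "real h < (1 - \<alpha>) * real n"
    and big: "4 * real h ^ 2 + real h < (1 - \<alpha>) ^ h / 2 * real n powr (1 - a)"
  shows "measure_pmf.prob (pmf_of_set (orderings S))
             {xs. \<not> in_O_qr (real n powr (-a)) h n (alphaN \<alpha> n) (take (alphaN \<alpha> n) xs)}
         \<le> (2 * real (Suc (3 * h)) * real (h + 1)) * real n ^ (h + 2)
             * exp (- (2 * ((1 - \<alpha>) ^ h / (2 * real (Suc (3 * h))))\<^sup>2) * real n powr (1 - 2 * a))"
proof -
  define N where "N = card S"
  define m where "m = alphaN \<alpha> n"
  define eps where "eps = real n powr (-a)"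
  define q where "q = (1 - \<alpha>) ^ h"
  define b where "b = 1 - 2 * a"
  define c1 where "c1 = 2 * (q / (2 * real (Suc (3 * h))))\<^sup>2"
  define AA where "AA = {A. A \<subseteq> {..<n} \<and> card A \<le> h}"
  define Bad where "Bad i A = {T\<in>sub S i. \<not> ((1 - eps) * ((real N - real i) / real N) ^ card A * real n
              \<le> (\<Sum>v\<in>{..<n} - A. Yv (Bv S A v) T) \<and>
            (\<Sum>v\<in>{..<n} - A. Yv (Bv S A v) T) \<le> (1 + eps) * ((real N - real i) / real N) ^ card A * real n)}"
    for i A
  define Ord where "Ord = orderings S"
  define Fail where "Fail = {xs. \<not> in_O_qr eps h n m (take m xs)}"
  have finS: "finite S" by (rule sts_finite[OF sts])
  have npos: "0 < n" using n7 by simp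
  have q0: "0 < q" "q \<le> 1" using al by (auto simp: q_def power_le_one)
  have eps0: "0 \<le> eps" by (simp add: eps_def)
  have N6: "6 * N = n * (n - 1)" using card_S[OF sts] two_choose2[of n] by (simp add: N_def)
  have nN: "n \<le> N"
  proof -
    have "n * 6 \<le> n * (n - 1)" using n7 by (intro mult_le_mono2) simp
    then show ?thesis using N6 by linarith
  qed
  have Npos: "0 < N" using nN npos by simp
  have N1: "N + 1 \<le> n ^ 2"
  proof -
    have "n * (n - 1) \<le> n * n" by (intro mult_le_mono2) simp
    moreover have "7 * 7 \<le> n * n" using mult_le_mono[OF n7 n7] .
    ultimately have "6 * N + 6 \<le> 6 * (n * n)" using N6 by linarith
    then show ?thesis by (simp add: power2_eq_square)
  qed
  have mdef: "m = nat \<lfloor>\<alpha> * real N\<rfloor>"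
  proof -
    have "real (n choose 2) / 3 = real N" using card_S[OF sts] by (simp add: N_def)
    then show ?thesis by (simp add: m_def alphaN_def)
  qed
  have mle: "real m \<le> \<alpha> * real N"
    unfolding mdef using al by (simp add: of_nat_nat)
  have mN: "m \<le> N"
  proof -
    have "\<alpha> * real N \<le> real N" using al by (simp add: mult_left_le_one_le)
    then show ?thesis using mle by linarith
  qed
  have term_bound: "real (card (Bad i A)) / real (card (sub S i)) \<le> 2 * real (Suc (3 * h)) * exp (- c1 * real n powr b)"
    if i: "i \<le> m" and A: "A \<in> AA" for i A
  proof -
    have A': "A \<subseteq> {..<n}" "card A \<le> h" using A by (auto simp: AA_def)
    have ik: "i + card A \<le> N"
    proof -
      have "real i + real (card A) \<le> \<alpha> * real N + real h" using i mle A'(2) by simp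
      also have "\<dots> \<le> \<alpha> * real N + (1 - \<alpha>) * real N"
        using hn nN al by (smt (verit) mult_left_mono of_nat_le_iff)
      finally show ?thesis by (simp add: algebra_simps flip: of_nat_add)
    qed
    have d1: "1 - \<alpha> \<le> (real N - real i) / real N"
    proof -
      have "real i \<le> \<alpha> * real N" using i mle by simp
      then show ?thesis using Npos by (simp add: field_simps)
    qed
    have dq: "q \<le> ((real N - real i) / real N) ^ card A"
    proof -
      have "q \<le> (1 - \<alpha>) ^ card A" unfolding q_def using A'(2) al by (intro power_decreasing) auto
      also have "\<dots> \<le> ((real N - real i) / real N) ^ card A" using d1 al by (intro power_mono) auto
      finally show ?thesis .
    qed
    have en: "eps * real n = real n powr (1 - a)"
      using npos by (simp add: eps_def powr_diff powr_minus field_simps)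
    have big': "4 * real h ^ 2 + real h < q * eps * real n / 2"
      using big by (simp add: q_def en mult.assoc)
    have pt: "real (card (Bad i A)) / real (card (sub S i))
        \<le> 2 * real (Suc (3 * h)) * exp (- 2 * ((q * eps * real n / 2) / real (Suc (3 * h)))\<^sup>2 / real n)"
      using per_term[OF sts A'(1) A'(2) ik[unfolded N_def] nN[unfolded N_def] npos eps0 _ dq[unfolded N_def] big'] q0
      by (simp add: Bad_def N_def)
    have "2 * ((q * eps * real n / 2) / real (Suc (3 * h)))\<^sup>2 / real n = c1 * real n powr b"
    proof -
      have p2: "(real n powr (1 - a))\<^sup>2 = real n * real n powr b"
      proof -
        have "(real n powr (1 - a))\<^sup>2 = real n powr (2 * (1 - a))"
          by (simp add: power2_eq_square powr_add[symmetric])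
        also have "2 * (1 - a) = 1 + b" by (simp add: b_def)
        also have "real n powr (1 + b) = real n * real n powr b" using npos by (simp add: powr_add)
        finally show ?thesis .
      qed
      have "2 * ((q * eps * real n / 2) / real (Suc (3 * h)))\<^sup>2 / real n
          = 2 * (q / (2 * real (Suc (3 * h))))\<^sup>2 * ((eps * real n)\<^sup>2 / real n)"
      proof -
        have "q * eps * real n / 2 / real (Suc (3 * h)) = (q / (2 * real (Suc (3 * h)))) * (eps * real n)"
          by (simp add: field_simps)
        then show ?thesis by (simp only: power_mult_distrib times_divide_eq_right mult.assoc)
      qed
      also have "(eps * real n)\<^sup>2 / real n = real n powr b" unfolding en p2 using npos by simp
      finally show ?thesis by (simp add: c1_def)
    qed
    then show ?thesis using pt by simp
  qed
  have contain: "Fail \<inter> Ord \<subseteq> (\<Union>p\<in>{..m} \<times> AA. {xs. set (take (fst p) xs) \<in> Bad (fst p) (snd p)})"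
  proof
    fix xs assume xs: "xs \<in> Fail \<inter> Ord"
    then have d: "distinct xs" "set xs = S" by (auto simp: Ord_def orderings_def)
    have lenxs: "length xs = N" using d distinct_card by (fastforce simp: N_def)
    have notq: "\<exists>i\<le>m. \<not> quasirandom eps h n (take i xs)"
    proof (rule ccontr)
      assume "\<not> ?thesis"
      then have qr: "\<forall>i\<le>m. quasirandom eps h n (take i (take m xs))" by (simp add: min_absorb1)
      have "distinct (take m xs)" using d by simp
      moreover have "length (take m xs) = m" using lenxs mN by simp
      moreover have "partial_system n (set (take m xs))"
        by (rule ps_subset[OF sts]) (use set_take_subset[of m xs] d(2) in simp)
      ultimately have "in_O_qr eps h n m (take m xs)" using qr by (simp add: in_O_qr_def)
      then show False using xs by (simp add: Fail_def)
    qed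
    then obtain i where i: "i \<le> m" "\<not> quasirandom eps h n (take i xs)" by blast
    then obtain A where A: "A \<subseteq> {..<n}" "card A \<le> h"
      "\<not> ((1 - eps) * leave_density n (take i xs) ^ card A * real n \<le> real (card (common_nbhd n (take i xs) A)) \<and>
         real (card (common_nbhd n (take i xs) A)) \<le> (1 + eps) * leave_density n (take i xs) ^ card A * real n)"
      unfolding quasirandom_def by blast
    have sub: "set (take i xs) \<subseteq> S" using set_take_subset[of i xs] d(2) by simp
    have ci: "card (set (take i xs)) = i"
      using d i(1) mN lenxs by (simp add: distinct_card min_absorb2)
    have T: "set (take i xs) \<in> sub S i" using sub ci by (simp add: sub_def)
    have "set (take i xs) \<in> Bad i A"
      using A(3) T unfolding Bad_def density_eq[OF sts sub] card_cn_sum[OF sts sub A(1)] ci N_def by simp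
    then show "xs \<in> (\<Union>p\<in>{..m} \<times> AA. {xs. set (take (fst p) xs) \<in> Bad (fst p) (snd p)})"
      using i(1) A(1,2) by (auto simp: AA_def)
  qed
  have finAA: "finite AA"
  proof -
    have "AA \<subseteq> Pow {..<n}" by (auto simp: AA_def)
    then show ?thesis by (rule finite_subset) simp
  qed
  have cAA: "card AA \<le> (h + 1) * n ^ h" unfolding AA_def by (rule count_A[OF npos])
  let ?P = "measure_pmf.prob (pmf_of_set Ord)"
  have "?P Fail = ?P (Fail \<inter> Ord)"
    using measure_Int_set_pmf[of "pmf_of_set Ord" Fail] finS by (simp add: Ord_def orderings_eq)
  also have "\<dots> \<le> ?P (\<Union>p\<in>{..m} \<times> AA. {xs. set (take (fst p) xs) \<in> Bad (fst p) (snd p)})"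
    by (rule measure_pmf.finite_measure_mono[OF contain]) simp
  also have "\<dots> \<le> (\<Sum>p\<in>{..m} \<times> AA. ?P {xs. set (take (fst p) xs) \<in> Bad (fst p) (snd p)})"
    by (rule measure_pmf.finite_measure_subadditive_finite) (use finAA in auto)
  also have "\<dots> \<le> (\<Sum>p\<in>{..m} \<times> AA. 2 * real (Suc (3 * h)) * exp (- c1 * real n powr b))"
  proof (rule sum_mono)
    fix p assume p: "p \<in> {..m} \<times> AA"
    have "?P {xs. set (take (fst p) xs) \<in> Bad (fst p) (snd p)} = real (card (Bad (fst p) (snd p))) / real (card (sub S (fst p)))"
      unfolding Ord_def by (rule prob_subsets[OF finS]) (use p mN in \<open>auto simp: Bad_def N_def\<close>)
    also have "\<dots> \<le> 2 * real (Suc (3 * h)) * exp (- c1 * real n powr b)"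
      using term_bound p by auto
    finally show "?P {xs. set (take (fst p) xs) \<in> Bad (fst p) (snd p)} \<le> 2 * real (Suc (3 * h)) * exp (- c1 * real n powr b)" .
  qed
  also have "\<dots> = real (Suc m) * real (card AA) * (2 * real (Suc (3 * h)) * exp (- c1 * real n powr b))"
    using finAA by (simp add: card_cartesian_product algebra_simps)
  also have "\<dots> \<le> real (n ^ 2) * real ((h + 1) * n ^ h) * (2 * real (Suc (3 * h)) * exp (- c1 * real n powr b))"
  proof -
    have "Suc m \<le> n ^ 2" using mN N1 by simp
    then have r1: "real (Suc m) \<le> real (n ^ 2)" by (simp only: of_nat_le_iff)
    have r2: "real (card AA) \<le> real ((h + 1) * n ^ h)" using cAA by (simp only: of_nat_le_iff)
    have "real (Suc m) * real (card AA) \<le> real (n ^ 2) * real ((h + 1) * n ^ h)"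
      by (rule mult_mono[OF r1 r2]) auto
    then show ?thesis by (intro mult_right_mono) auto
  qed
  also have "\<dots> = (2 * real (Suc (3 * h)) * real (h + 1)) * real n ^ (h + 2) * exp (- c1 * real n powr b)"
    by (simp add: power_add power2_eq_square algebra_simps)
  finally show ?thesis unfolding Fail_def Ord_def eps_def m_def c1_def b_def q_def by simp
qed

end

lemma ev_lin: "0 < r \<Longrightarrow> eventually (\<lambda>x::real. M < r * x) at_top"
  by real_asymp

lemma ev_pow: "0 < e \<Longrightarrow> 0 < r \<Longrightarrow> eventually (\<lambda>x::real. M < r * x powr e) at_top"
  by real_asymp

lemma lim_ln: "0 < b \<Longrightarrow> ((\<lambda>x::real. (L + H * ln x) / x powr b) \<longlongrightarrow> 0) at_top"
  by real_asymp

theorem lemma2p6: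
  fixes h :: nat and \<alpha> a :: real
  assumes "0 < \<alpha>" "\<alpha> < 1" "0 < a" "a < 1/2"
  shows "\<exists>c>0. \<exists>n0. \<forall>n\<ge>n0. \<forall>S.
           (n mod 6 = 1 \<or> n mod 6 = 3) \<longrightarrow> steiner_triple_system n S \<longrightarrow>
           measure_pmf.prob (pmf_of_set (orderings S))
             {xs. \<not> in_O_qr (real n powr (-a)) h n (alphaN \<alpha> n) (take (alphaN \<alpha> n) xs)}
           \<le> exp (- c * real n powr (1 - 2 * a))"
proof -
  define q where "q = (1 - \<alpha>) ^ h"
  define b where "b = 1 - 2 * a"
  define c1 where "c1 = 2 * (q / (2 * real (Suc (3 * h))))\<^sup>2"
  define Kc where "Kc = 2 * real (Suc (3 * h)) * real (h + 1)"
  have q: "0 < q" using assms by (simp add: q_def)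
  have b: "0 < b" using assms by (simp add: b_def)
  have c1: "0 < c1" using q by (simp add: c1_def)
  have Kc: "0 < Kc" by (simp add: Kc_def)
  have ev: "eventually (\<lambda>x. 7 \<le> x \<and> real h < (1 - \<alpha>) * x \<and>
      4 * real h ^ 2 + real h < q / 2 * x powr (1 - a) \<and>
      (ln Kc + real (h + 2) * ln x) / x powr b < c1 / 2) at_top"
  proof (intro eventually_conj)
    show "eventually (\<lambda>x::real. 7 \<le> x) at_top" by (rule eventually_ge_at_top)
    show "eventually (\<lambda>x. real h < (1 - \<alpha>) * x) at_top" by (rule ev_lin) (use assms in simp)
    show "eventually (\<lambda>x. 4 * real h ^ 2 + real h < q / 2 * x powr (1 - a)) at_top"
      by (rule ev_pow) (use assms q in auto)
    show "eventually (\<lambda>x. (ln Kc + real (h + 2) * ln x) / x powr b < c1 / 2) at_top"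
      by (rule order_tendstoD(2)[OF lim_ln[OF b]]) (use c1 in simp)
  qed
  then obtain x0 where x0: "\<And>x. x \<ge> x0 \<Longrightarrow> 7 \<le> x \<and> real h < (1 - \<alpha>) * x \<and>
      4 * real h ^ 2 + real h < q / 2 * x powr (1 - a) \<and>
      (ln Kc + real (h + 2) * ln x) / x powr b < c1 / 2"
    unfolding eventually_at_top_linorder by blast
  show ?thesis
  proof (intro exI[of _ "c1 / 2"] conjI allI impI exI[of _ "nat \<lceil>x0\<rceil>"])
    show "0 < c1 / 2" using c1 by simp
    fix n S assume n: "nat \<lceil>x0\<rceil> \<le> n" and sts: "steiner_triple_system n S"
    have "x0 \<le> real n" using n by linarith
    note P = x0[OF this]
    have n7: "7 \<le> n" using P by linarith
    have npos: "0 < real n" using n7 by simp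
    have "measure_pmf.prob (pmf_of_set (orderings S))
             {xs. \<not> in_O_qr (real n powr (-a)) h n (alphaN \<alpha> n) (take (alphaN \<alpha> n) xs)}
         \<le> Kc * real n ^ (h + 2) * exp (- c1 * real n powr b)"
      using main_bound[OF sts assms(1,2,3) n7] P unfolding Kc_def c1_def b_def q_def by simp
    also have "\<dots> \<le> exp (- (c1 / 2) * real n powr b)"
      by (rule final_ineq[OF npos Kc]) (use P in simp)
    finally show "measure_pmf.prob (pmf_of_set (orderings S))
             {xs. \<not> in_O_qr (real n powr (-a)) h n (alphaN \<alpha> n) (take (alphaN \<alpha> n) xs)}
         \<le> exp (- (c1 / 2) * real n powr (1 - 2 * a))" by (simp add: b_def)
  qed
qed

end
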